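(* Let $R$ be a unital von Neumann regular ring and $E$ a directed graph. Let $S=M(\mathbb{Z},I)\cup\{0\}$ and $w$ a canonical weight mapping on $E$. Then $L_R(E)$, with the canonical $S$-grading determined by $w$, is graded von Neumann regular.
   Context: Directed graph $E=(E^0,E^1,\mathrm{r},\mathrm{s})$ (arbitrary, possibly infinite); paths $E^*$ (vertices as length-$0$ paths); $\mathrm{Reg}(E)$ = vertices $v$ with $\mathrm{s}^{-1}(v)$ nonempty finite. $L_R(E)$ is the $R$-algebra generated by $E^0$, $E^1$, $\{\alpha^*\}$ ($R$ commuting with generators) with relations $vv'=\delta_{v,v'}v$; $\mathrm{s}(\alpha)\alpha=\alpha\mathrm{r}(\alpha)=\alpha$, $\mathrm{r}(\alpha)\alpha^*=\alpha^*\mathrm{s}(\alpha)=\alpha^*$; $\alpha^*\alpha'=\delta_{\alpha,\alpha'}\mathrm{r}(\alpha)$; $\sum_{\mathrm{s}(\alpha)=v}\alpha\alpha^*=v$ for $v\in\mathrm{Reg}(E)$. $M(\mathbb{Z},I)=I\times\mathbb{Z}\times I$, $(i,a,j)(k,b,l)=(i,a+b,l)$ if $j=k$, else undefined; $S=M(\mathbb{Z},I)\cup\{0\}$, undefined products $0$, $0$ absorbing; $(i,a,j)^{-1}=(j,-a,i)$. Canonical weight mapping: vertices get weights $(i,0,i)$, edges $(i,1,j)$, $w(\alpha^* )=w(\alpha)^{-1}$, $w(\mathrm{s}(\alpha))w(\alpha)=w(\alpha)=w(\alpha)w(\mathrm{r}(\alpha))$; for each nonzero idempotent $f$, edges with source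 of weight $f$ share a weight and edges with range of weight $f$ share a weight; extended multiplicatively with $w(\mu\eta^* )=w(\mu)w(\eta)^{-1}$. Canonical grading: $(L_R(E))_s$ = $R$-span of $\mu\eta^*$, $\mathrm{r}(\mu)=\mathrm{r}(\eta)$, $w(\mu\eta^* )=s$; $(L_R(E))_0=0$. A graded ring $A=\bigoplus_sA_s$ is graded von Neumann regular if $x\in xAx$ for every $x\in\bigcup_sA_s$. *)

theory Defs
  imports Main
begin

text \<open>None represents 0; Some (i,a,j) represents (i,a,j).\<close>
type_synonym 'i sg = "('i \<times> int \<times> 'i) option"

fun smult :: "'i sg \<Rightarrow> 'i sg \<Rightarrow> 'i sg" where
  "smult (Some (i, a, j)) (Some (k, b, l)) = (if j = k then Some (i, a + b, l) else None)"
| "smult _ _ = None"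

fun sinv :: "'i sg \<Rightarrow> 'i sg" where
  "sinv (Some (i, a, j)) = Some (j, - a, i)"
| "sinv None = None"

definition vn_regular_ring :: "'r::ring_1 itself \<Rightarrow> bool" where
  "vn_regular_ring _ = (\<forall>a::'r. \<exists>b. a * b * a = a)"

text \<open>A directed graph is given by a vertex set V0, an edge set E1 and
  range/source maps rg, sc (assumed to map E1 into V0).\<close>

definition Reg :: "'v set \<Rightarrow> 'e set \<Rightarrow> ('e \<Rightarrow> 'v) \<Rightarrow> 'v set" where
  "Reg V0 E1 sc = {v \<in> V0. {e \<in> E1. sc e = v} \<noteq> {} \<and> finite {e \<in> E1. sc e = v}}"

text \<open>A path is a pair (v, es): if es = [] it is the vertex v (length 0),
  otherwise the edge sequence es starting at v.\<close>
definition is_path :: "'v set \<Rightarrow> 'e set \<Rightarrow> ('e \<Rightarrow> 'v) \<Rightarrow> ('e \<Rightarrow> 'v) \<Rightarrow> 'v \<times> 'e list \<Rightarrow> bool" where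
  "is_path V0 E1 rg sc p = (case p of (v, es) \<Rightarrow>
     v \<in> V0 \<and> set es \<subseteq> E1 \<and> (es \<noteq> [] \<longrightarrow> sc (hd es) = v) \<and>
     (\<forall>i. Suc i < length es \<longrightarrow> rg (es ! i) = sc (es ! Suc i)))"

definition prange :: "('e \<Rightarrow> 'v) \<Rightarrow> 'v \<times> 'e list \<Rightarrow> 'v" where
  "prange rg p = (case p of (v, es) \<Rightarrow> if es = [] then v else rg (last es))"

definition canonical_weight ::
  "'v set \<Rightarrow> 'e set \<Rightarrow> ('e \<Rightarrow> 'v) \<Rightarrow> ('e \<Rightarrow> 'v) \<Rightarrow> ('v \<Rightarrow> 'i sg) \<Rightarrow> ('e \<Rightarrow> 'i sg) \<Rightarrow> bool" where
  "canonical_weight V0 E1 rg sc wv we \<longleftrightarrow>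
     (\<forall>v\<in>V0. \<exists>i. wv v = Some (i, 0, i)) \<and>
     (\<forall>e\<in>E1. \<exists>i j. we e = Some (i, 1, j)) \<and>
     (\<forall>e\<in>E1. smult (wv (sc e)) (we e) = we e \<and> smult (we e) (wv (rg e)) = we e) \<and>
     (\<forall>f. f \<noteq> None \<and> smult f f = f \<longrightarrow>
        (\<forall>e\<in>E1. \<forall>e'\<in>E1. wv (sc e) = f \<and> wv (sc e') = f \<longrightarrow> we e = we e') \<and>
        (\<forall>e\<in>E1. \<forall>e'\<in>E1. wv (rg e) = f \<and> wv (rg e') = f \<longrightarrow> we e = we e'))"

definition pweight :: "('v \<Rightarrow> 'i sg) \<Rightarrow> ('e \<Rightarrow> 'i sg) \<Rightarrow> 'v \<times> 'e list \<Rightarrow> 'i sg" where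
  "pweight wv we p = (case p of (v, es) \<Rightarrow>
     if es = [] then wv v else foldr (\<lambda>e acc. smult (we e) acc) (butlast es) (we (last es)))"

text \<open>Generators: vertices, real edges, ghost edges (alpha^*).  Elements of the
  free (unital) R-algebra with R commuting with generators are finitely supported
  functions from words to R; multiplication is convolution.\<close>
datatype ('v, 'e) gen = Vx 'v | Ed 'e | Gh 'e

definition gen_in :: "'v set \<Rightarrow> 'e set \<Rightarrow> ('v, 'e) gen \<Rightarrow> bool" where
  "gen_in V0 E1 g = (case g of Vx v \<Rightarrow> v \<in> V0 | Ed e \<Rightarrow> e \<in> E1 | Gh e \<Rightarrow> e \<in> E1)"

definition fmono :: "'r::zero \<Rightarrow> 'a list \<Rightarrow> ('a list \<Rightarrow> 'r)" where
  "fmono c u = (\<lambda>w. if w = u then c else 0)"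

definition fadd :: "('a list \<Rightarrow> 'r::plus) \<Rightarrow> ('a list \<Rightarrow> 'r) \<Rightarrow> ('a list \<Rightarrow> 'r)" where
  "fadd f g = (\<lambda>w. f w + g w)"

definition fdiff :: "('a list \<Rightarrow> 'r::minus) \<Rightarrow> ('a list \<Rightarrow> 'r) \<Rightarrow> ('a list \<Rightarrow> 'r)" where
  "fdiff f g = (\<lambda>w. f w - g w)"

definition fmult :: "('a list \<Rightarrow> 'r::semiring_0) \<Rightarrow> ('a list \<Rightarrow> 'r) \<Rightarrow> ('a list \<Rightarrow> 'r)" where
  "fmult f g = (\<lambda>w. \<Sum>k\<le>length w. f (take k w) * g (drop k w))"

text \<open>Defining relations of L_R(E), written as elements that are set to 0.\<close>
definition LPA_rels :: "'v set \<Rightarrow> 'e set \<Rightarrow> ('e \<Rightarrow> 'v) \<Rightarrow> ('e \<Rightarrow> 'v) \<Rightarrow>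
    ((('v, 'e) gen list \<Rightarrow> 'r::ring_1) set)" where
  "LPA_rels V0 E1 rg sc =
     {fdiff (fmono 1 [Vx v, Vx v']) (if v = v' then fmono 1 [Vx v] else (\<lambda>_. 0)) | v v'. v \<in> V0 \<and> v' \<in> V0}
   \<union> {fdiff (fmono 1 [Vx (sc e), Ed e]) (fmono 1 [Ed e]) | e. e \<in> E1}
   \<union> {fdiff (fmono 1 [Ed e, Vx (rg e)]) (fmono 1 [Ed e]) | e. e \<in> E1}
   \<union> {fdiff (fmono 1 [Vx (rg e), Gh e]) (fmono 1 [Gh e]) | e. e \<in> E1}
   \<union> {fdiff (fmono 1 [Gh e, Vx (sc e)]) (fmono 1 [Gh e]) | e. e \<in> E1}
   \<union> {fdiff (fmono 1 [Gh e, Ed e']) (if e = e' then fmono 1 [Vx (rg e)] else (\<lambda>_. 0)) | e e'. e \<in> E1 \<and> e' \<in> E1}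
   \<union> {fdiff (\<lambda>w. \<Sum>e\<in>{e \<in> E1. sc e = v}. fmono 1 [Ed e, Gh e] w) (fmono 1 [Vx v]) | v. v \<in> Reg V0 E1 sc}"

inductive_set LPA_ideal :: "'v set \<Rightarrow> 'e set \<Rightarrow> ('e \<Rightarrow> 'v) \<Rightarrow> ('e \<Rightarrow> 'v) \<Rightarrow>
    ((('v, 'e) gen list \<Rightarrow> 'r::ring_1) set)"
  for V0 E1 rg sc where
  zero: "(\<lambda>_. 0) \<in> LPA_ideal V0 E1 rg sc"
| gen: "\<lbrakk> g \<in> LPA_rels V0 E1 rg sc; \<forall>x\<in>set u. gen_in V0 E1 x; \<forall>x\<in>set u'. gen_in V0 E1 x \<rbrakk>
        \<Longrightarrow> fmult (fmult (fmono c u) g) (fmono c' u') \<in> LPA_ideal V0 E1 rg sc"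
| add: "\<lbrakk> f \<in> LPA_ideal V0 E1 rg sc; g \<in> LPA_ideal V0 E1 rg sc \<rbrakk>
        \<Longrightarrow> fadd f g \<in> LPA_ideal V0 E1 rg sc"

text \<open>Representatives of elements of the (non-unital) algebra L_R(E): finitely
  supported R-combinations of nonempty words in the generators.  L_R(E) is the
  quotient of this set modulo LPA_ideal.\<close>
definition LPA_carrier :: "'v set \<Rightarrow> 'e set \<Rightarrow> ((('v, 'e) gen list \<Rightarrow> 'r::ring_1) set)" where
  "LPA_carrier V0 E1 = {f. finite {w. f w \<noteq> 0} \<and>
     (\<forall>w. f w \<noteq> 0 \<longrightarrow> w \<noteq> [] \<and> (\<forall>x\<in>set w. gen_in V0 E1 x))}"

definition pword :: "'v \<times> 'e list \<Rightarrow> ('v, 'e) gen list" where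
  "pword p = (case p of (v, es) \<Rightarrow> if es = [] then [Vx v] else map Ed es)"

definition pghost :: "'v \<times> 'e list \<Rightarrow> ('v, 'e) gen list" where
  "pghost p = (case p of (v, es) \<Rightarrow> if es = [] then [Vx v] else rev (map Gh es))"

text \<open>Representatives of the homogeneous component (L_R(E))_sigma of the canonical grading:
  R-span of mu eta^* with r(mu) = r(eta) and w(mu eta^*) = sigma; the 0-component is 0.\<close>
inductive_set LPA_hom :: "'v set \<Rightarrow> 'e set \<Rightarrow> ('e \<Rightarrow> 'v) \<Rightarrow> ('e \<Rightarrow> 'v) \<Rightarrow>
    ('v \<Rightarrow> 'i sg) \<Rightarrow> ('e \<Rightarrow> 'i sg) \<Rightarrow> 'i sg \<Rightarrow> ((('v, 'e) gen list \<Rightarrow> 'r::ring_1) set)"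
  for V0 E1 rg sc wv we \<sigma> where
  zero: "(\<lambda>_. 0) \<in> LPA_hom V0 E1 rg sc wv we \<sigma>"
| mono: "\<lbrakk> \<sigma> \<noteq> None; is_path V0 E1 rg sc \<mu>; is_path V0 E1 rg sc \<eta>; prange rg \<mu> = prange rg \<eta>;
          smult (pweight wv we \<mu>) (sinv (pweight wv we \<eta>)) = \<sigma>;
          h \<in> LPA_hom V0 E1 rg sc wv we \<sigma> \<rbrakk>
        \<Longrightarrow> fadd (fmono c (pword \<mu> @ pghost \<eta>)) h \<in> LPA_hom V0 E1 rg sc wv we \<sigma>"

end

theory Submission
  imports Defs "HOL-Library.Function_Algebras"
begin


lemma fmult_assoc:
  fixes f g h :: "'a list \<Rightarrow> 'r::ring_1"
  shows "fmult (fmult f g) h = fmult f (fmult g h)"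
proof
  fix w :: "'a list"
  define n where "n = length w"
  define G where "G = (\<lambda>i j. f (take i w) * g (take j (drop i w)) * h (drop (i+j) w))"
  have L: "fmult (fmult f g) h w = (\<Sum>k\<le>n. \<Sum>i\<le>k. G i (k - i))"
    unfolding fmult_def n_def
    by (auto simp: sum_distrib_right G_def min_def drop_take intro!: sum.cong)
  have R: "fmult f (fmult g h) w = (\<Sum>i\<le>n. \<Sum>j\<le>n-i. G i j)"
    unfolding fmult_def n_def
    by (auto simp: sum_distrib_left G_def mult.assoc add.commute intro!: sum.cong)
  have "(\<Sum>i\<le>n. \<Sum>j\<le>n-i. G i j) = (\<Sum>(i,j)\<in>Sigma {..n} (\<lambda>i. {..n-i}). G i j)"
    by (simp add: sum.Sigma)
  also have "Sigma {..n} (\<lambda>i. {..n-i}) = {(i,j). i+j \<le> n}" by auto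
  also have "(\<Sum>(i,j)\<in>{(i,j). i+j \<le> n}. G i j) = (\<Sum>k\<le>n. \<Sum>i\<le>k. G i (k - i))"
    by (rule sum.triangle_reindex_eq)
  finally show "fmult (fmult f g) h w = fmult f (fmult g h) w" using L R by simp
qed


datatype ('g, 'r) fps = FPS (coeff: "'g list \<Rightarrow> 'r")

lemma fps_eqI: "(\<And>w. coeff f w = coeff g w) \<Longrightarrow> f = g"
  by (cases f; cases g) auto

lemma fmult_one_left:
  "fmult (\<lambda>w. if w = [] then 1 else 0) f = (f :: 'a list \<Rightarrow> 'r::ring_1)"
proof
  fix w
  have "fmult (\<lambda>w. if w = [] then 1 else 0) f w = (\<Sum>k\<le>length w. if k = 0 then f w else 0)"
    unfolding fmult_def by (intro sum.cong) auto
  then show "fmult (\<lambda>w. if w = [] then 1 else 0) f w = f w" by simp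
qed

lemma fmult_one_right:
  "fmult f (\<lambda>w. if w = [] then 1 else 0) = (f :: 'a list \<Rightarrow> 'r::ring_1)"
proof
  fix w
  have "fmult f (\<lambda>w. if w = [] then 1 else 0) w = (\<Sum>k\<le>length w. if k = length w then f w else 0)"
    unfolding fmult_def by (intro sum.cong) auto
  then show "fmult f (\<lambda>w. if w = [] then 1 else 0) w = f w" by simp
qed

instantiation fps :: (type, ring_1) ring_1
begin
definition zero_fps_def: "0 = FPS (\<lambda>_. 0)"
definition one_fps_def: "1 = FPS (\<lambda>w. if w = [] then 1 else 0)"
definition plus_fps_def: "f + g = FPS (\<lambda>w. coeff f w + coeff g w)"
definition minus_fps_def: "f - g = FPS (\<lambda>w. coeff f w - coeff g w)"
definition uminus_fps_def: "- f = FPS (\<lambda>w. - coeff f w)"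
definition times_fps_def: "f * g = FPS (fmult (coeff f) (coeff g))"
instance
proof
  fix a b c :: "('a,'b) fps"
  show "a * b * c = a * (b * c)" by (simp add: times_fps_def fmult_assoc)
  show "a + b + c = a + (b + c)" by (simp add: plus_fps_def add.assoc)
  show "a + b = b + a" by (simp add: plus_fps_def add.commute)
  show "0 + a = a" by (rule fps_eqI) (simp add: plus_fps_def zero_fps_def)
  show "- a + a = 0" by (simp add: plus_fps_def zero_fps_def uminus_fps_def)
  show "a - b = a + - b" by (simp add: plus_fps_def minus_fps_def uminus_fps_def)
  show "(a + b) * c = a * c + b * c"
    by (simp add: plus_fps_def times_fps_def fmult_def distrib_right sum.distrib)
  show "a * (b + c) = a * b + a * c"
    by (simp add: plus_fps_def times_fps_def fmult_def distrib_left sum.distrib)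
  show "1 * a = a" by (rule fps_eqI) (simp add: one_fps_def times_fps_def fmult_one_left)
  show "a * 1 = a" by (rule fps_eqI) (simp add: one_fps_def times_fps_def fmult_one_right)
  show "(0::('a,'b) fps) \<noteq> 1" by (simp add: zero_fps_def one_fps_def fun_eq_iff)
qed
end

lemma coeff_0[simp]: "coeff 0 w = 0" by (simp add: zero_fps_def)
lemma coeff_add[simp]: "coeff (f + g) w = coeff f w + coeff g w" by (simp add: plus_fps_def)
lemma coeff_diff[simp]: "coeff (f - g) w = coeff f w - coeff g w" by (simp add: minus_fps_def)
lemma coeff_neg[simp]: "coeff (- f) w = - coeff f w" by (simp add: uminus_fps_def)
lemma coeff_mult: "coeff (f * g) = fmult (coeff f) (coeff g)" by (simp add: times_fps_def)
lemma coeff_sum[simp]: "coeff (sum F A) w = (\<Sum>a\<in>A. coeff (F a) w)"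
  by (induction A rule: infinite_finite_induct) auto

definition mon :: "'r::ring_1 \<Rightarrow> 'g list \<Rightarrow> ('g,'r) fps" where
  "mon c u = FPS (fmono c u)"

lemma coeff_mon[simp]: "coeff (mon c u) = fmono c u" by (simp add: mon_def)

lemma fmult_fmono: "fmult (fmono c u) (fmono d v) = fmono (c * d) (u @ v)"
proof
  fix w
  show "fmult (fmono c u) (fmono d v) w = fmono (c * d) (u @ v) w"
  proof (cases "w = u @ v")
    case True
    have "\<And>k. k \<le> length w \<Longrightarrow> take k w = u \<Longrightarrow> k = length u"
      by (metis length_take min_absorb2)
    then have "fmult (fmono c u) (fmono d v) w = (\<Sum>k\<le>length w. if k = length u then c * d else 0)"
      unfolding fmult_def fmono_def using True by (intro sum.cong) auto
    then show ?thesis using True by (simp add: fmono_def)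
  next
    case False
    then have "fmult (fmono c u) (fmono d v) w = (\<Sum>k\<le>length w. 0)"
      unfolding fmult_def fmono_def using False
      by (intro sum.cong refl) (auto simp del: append_take_drop_id simp: append_take_drop_id[symmetric])
    then show ?thesis using False by (simp add: fmono_def)
  qed
qed

lemma mon_mult: "mon c u * mon d v = mon (c * d) (u @ v)"
  by (simp add: mon_def times_fps_def fmult_fmono)

lemma mon_0[simp]: "mon 0 u = 0"
  by (rule fps_eqI) (simp add: fmono_def)

lemma mon_add: "mon (c + d) u = mon c u + mon d u"
  by (rule fps_eqI) (simp add: fmono_def)

lemma mon_neg: "mon (- c) u = - mon c u"
  by (rule fps_eqI) (simp add: fmono_def)

lemma mon_one: "mon 1 [] = 1"
  by (rule fps_eqI) (simp add: fmono_def one_fps_def)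


lemma fmult_fmono_Nil_right: "fmult f (fmono b []) = (\<lambda>w. f w * (b::'r::ring_1))"
proof
  fix w
  have "fmult f (fmono b []) w = (\<Sum>k\<le>length w. if k = length w then f w * b else 0)"
    unfolding fmult_def fmono_def by (intro sum.cong) auto
  then show "fmult f (fmono b []) w = f w * b" by simp
qed

lemma fmult_fmono_Nil_left: "fmult (fmono b []) f = (\<lambda>w. (b::'r::ring_1) * f w)"
proof
  fix w
  have "fmult (fmono b []) f w = (\<Sum>k\<le>length w. if k = 0 then b * f w else 0)"
    unfolding fmult_def fmono_def by (intro sum.cong) auto
  then show "fmult (fmono b []) f w = b * f w" by simp
qed

lemma coeff_mult_mon_Nil_right[simp]: "coeff (X * mon b []) w = coeff X w * b"
  by (simp add: coeff_mult fmult_fmono_Nil_right)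
lemma coeff_mult_mon_Nil_left[simp]: "coeff (mon b [] * X) w = b * coeff X w"
  by (simp add: coeff_mult fmult_fmono_Nil_left)

definition Cen :: "('g, 'r::ring_1) fps \<Rightarrow> bool" where
  "Cen f \<longleftrightarrow> (\<forall>w r. coeff f w * r = r * coeff f w)"

lemma Cen_mon_commute: "Cen X \<Longrightarrow> X * mon b [] = mon b [] * X"
  by (rule fps_eqI) (simp add: Cen_def)

lemma Cen_add: "Cen a \<Longrightarrow> Cen b \<Longrightarrow> Cen (a + b)"
  by (simp add: Cen_def distrib_left distrib_right)
lemma Cen_neg: "Cen a \<Longrightarrow> Cen (- a)"
  by (simp add: Cen_def)
lemma Cen_diff: "Cen a \<Longrightarrow> Cen b \<Longrightarrow> Cen (a - b)"
  by (simp add: Cen_def left_diff_distrib right_diff_distrib)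
lemma Cen_0: "Cen 0" by (simp add: Cen_def)
lemma Cen_sum: "(\<And>i. i \<in> A \<Longrightarrow> Cen (f i)) \<Longrightarrow> Cen (sum f A)"
  by (induction A rule: infinite_finite_induct) (auto simp: Cen_0 Cen_add)
lemma comm_helper: "y * r = r * y \<Longrightarrow> x * r = r * x \<Longrightarrow> x * (y * r) = r * (x * (y::'r::ring_1))"
proof -
  assume h: "y * r = r * y" "x * r = r * x"
  have "x * (y * r) = (x * r) * y" using h(1) by (simp add: mult.assoc)
  also have "\<dots> = r * (x * y)" using h(2) by (simp add: mult.assoc)
  finally show ?thesis .
qed

lemma Cen_mult: "Cen a \<Longrightarrow> Cen b \<Longrightarrow> Cen (a * b)"
proof -
  assume a: "Cen a" and b: "Cen b"
  show "Cen (a * b)" unfolding Cen_def coeff_mult fmult_def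
  proof (intro allI)
    fix w and r :: 'b
    have "(\<Sum>k\<le>length w. coeff a (take k w) * coeff b (drop k w)) * r
        = (\<Sum>k\<le>length w. coeff a (take k w) * (coeff b (drop k w) * r))"
      by (simp add: sum_distrib_right mult.assoc)
    also have "\<dots> = (\<Sum>k\<le>length w. r * (coeff a (take k w) * coeff b (drop k w)))"
      using a b unfolding Cen_def by (intro sum.cong refl) (rule comm_helper; blast)
    finally show "(\<Sum>k\<le>length w. coeff a (take k w) * coeff b (drop k w)) * r
        = r * (\<Sum>k\<le>length w. coeff a (take k w) * coeff b (drop k w))"
      by (simp add: sum_distrib_left)
  qed
qed
lemma Cen_mon1: "Cen (mon 1 u)" by (simp add: Cen_def fmono_def)
lemma Cen_1: "Cen 1" using Cen_mon1[of "[]"] by (simp add: mon_one)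

lemma smul_mult:
  assumes "Cen X"
  shows "(mon a [] * X) * (mon b [] * Y) = mon (a * b) [] * (X * Y)"
proof -
  have "(mon a [] * X) * (mon b [] * Y) = mon a [] * (X * mon b []) * Y"
    by (simp add: mult.assoc)
  also have "\<dots> = mon a [] * mon b [] * X * Y" using Cen_mon_commute[OF assms]
    by (simp add: mult.assoc)
  finally show ?thesis by (simp add: mon_mult mult.assoc)
qed

lemma mon_times_sum_support:
  assumes "finite {w. coeff f w \<noteq> 0}"
  shows "f = (\<Sum>w\<in>{w. coeff f w \<noteq> 0}. mon (coeff f w) w)"
proof (rule fps_eqI)
  fix w'
  have "coeff (\<Sum>w\<in>{w. coeff f w \<noteq> 0}. mon (coeff f w) w) w'
      = (\<Sum>w\<in>{w. coeff f w \<noteq> 0}. if w' = w then coeff f w else 0)"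
    by (simp add: fmono_def)
  also have "\<dots> = coeff f w'"
    using assms by (simp add: sum.delta')
  finally show "coeff f w' = coeff (\<Sum>w\<in>{w. coeff f w \<noteq> 0}. mon (coeff f w) w) w'" by simp
qed



definition valid_word :: "'v set \<Rightarrow> 'e set \<Rightarrow> ('v,'e) gen list \<Rightarrow> bool" where
  "valid_word V0 E1 w \<longleftrightarrow> (\<forall>x\<in>set w. gen_in V0 E1 x)"

lemma valid_word_append: "valid_word V0 E1 (u @ v) \<longleftrightarrow> valid_word V0 E1 u \<and> valid_word V0 E1 v"
  by (auto simp: valid_word_def)

locale lpa =
  fixes V0 :: "'v set" and E1 :: "'e set" and rg sc :: "'e \<Rightarrow> 'v"
  assumes edges_ok: "\<forall>e\<in>E1. sc e \<in> V0 \<and> rg e \<in> V0"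
begin

definition J :: "(('v,'e) gen, 'r::ring_1) fps set" where
  "J = {f. coeff f \<in> LPA_ideal V0 E1 rg sc}"

definition Val :: "(('v,'e) gen, 'r::ring_1) fps set" where
  "Val = {f. finite {w. coeff f w \<noteq> 0} \<and> (\<forall>w. coeff f w \<noteq> 0 \<longrightarrow> valid_word V0 E1 w)}"

definition cong :: "(('v,'e) gen, 'r::ring_1) fps \<Rightarrow> (('v,'e) gen, 'r) fps \<Rightarrow> bool" (infix "\<approx>" 50) where
  "a \<approx> b \<longleftrightarrow> a \<in> Val \<and> b \<in> Val \<and> a - b \<in> J"

lemma J_gen: "g \<in> LPA_rels V0 E1 rg sc \<Longrightarrow> valid_word V0 E1 u \<Longrightarrow> valid_word V0 E1 u'
   \<Longrightarrow> mon c u * FPS g * mon c' u' \<in> J"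
  unfolding J_def valid_word_def by (simp add: coeff_mult LPA_ideal.gen)

lemma J_0: "0 \<in> J" unfolding J_def zero_fps_def by (simp add: LPA_ideal.zero)

lemma J_add: "a \<in> J \<Longrightarrow> b \<in> J \<Longrightarrow> a + b \<in> J"
  unfolding J_def using LPA_ideal.add[of "coeff a" V0 E1 rg sc "coeff b"]
  by (simp add: fadd_def plus_fps_def)

lemma J_induct[consumes 1, case_names zero gen add]:
  assumes "h \<in> J"
    and "P 0"
    and "\<And>g u u' c c'. g \<in> LPA_rels V0 E1 rg sc \<Longrightarrow> valid_word V0 E1 u \<Longrightarrow> valid_word V0 E1 u'
          \<Longrightarrow> P (mon c u * FPS g * mon c' u')"
    and "\<And>a b. a \<in> J \<Longrightarrow> b \<in> J \<Longrightarrow> P a \<Longrightarrow> P b \<Longrightarrow> P (a + b)"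
  shows "P h"
proof -
  have "coeff h \<in> LPA_ideal V0 E1 rg sc" using assms(1) by (simp add: J_def)
  then have "P (FPS (coeff h))"
  proof (induction "coeff h" arbitrary: h rule: LPA_ideal.induct)
    case zero then show ?case using assms(2) by (simp add: zero_fps_def)
  next
    case (gen g u u' c c')
    have "FPS (fmult (fmult (fmono c u) g) (fmono c' u')) = mon c u * FPS g * mon c' u'"
      by (simp add: times_fps_def)
    then show ?case using assms(3)[of g u u' c c'] gen by (simp add: valid_word_def)
  next
    case (add f g)
    have "FPS (fadd f g) = FPS f + FPS g" by (simp add: plus_fps_def fadd_def)
    then show ?case using add assms(4)[of "FPS f" "FPS g"] by (simp add: J_def)
  qed
  then show ?thesis by simp
qed

lemma J_neg: "a \<in> J \<Longrightarrow> - a \<in> J"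
proof (induction rule: J_induct)
  case zero then show ?case by (simp add: J_0)
next
  case (gen g u u' c c')
  have "- (mon c u * FPS g * mon c' u') = mon (-c) u * FPS g * mon c' u'"
    by (simp add: mon_neg)
  then show ?case using gen J_gen by simp
next
  case (add a b)
  have "- (a + b) = - a + - b" by simp
  then show ?case using add J_add by metis
qed

lemma J_diff: "a \<in> J \<Longrightarrow> b \<in> J \<Longrightarrow> a - b \<in> J"
  using J_add[of a "- b"] J_neg[of b] by (simp add: diff_conv_add_uminus del: add_uminus_conv_diff)

lemma J_sum: "(\<And>i. i \<in> A \<Longrightarrow> f i \<in> J) \<Longrightarrow> sum f A \<in> J"
  by (induction A rule: infinite_finite_induct) (auto simp: J_0 J_add)

lemma J_mon_left: "a \<in> J \<Longrightarrow> valid_word V0 E1 v \<Longrightarrow> mon d v * a \<in> J"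
proof (induction rule: J_induct)
  case zero then show ?case by (simp add: J_0)
next
  case (gen g u u' c c')
  have "mon d v * (mon c u * FPS g * mon c' u') = mon (d * c) (v @ u) * FPS g * mon c' u'"
    by (simp add: mon_mult mult.assoc[symmetric])
  moreover have "valid_word V0 E1 (v @ u)" using gen by (auto simp: valid_word_def)
  ultimately show ?case using gen J_gen by simp
next
  case (add a b) then show ?case using J_add by (simp add: distrib_left)
qed

lemma J_mon_right: "a \<in> J \<Longrightarrow> valid_word V0 E1 v \<Longrightarrow> a * mon d v \<in> J"
proof (induction rule: J_induct)
  case zero then show ?case by (simp add: J_0)
next
  case (gen g u u' c c')
  have "(mon c u * FPS g * mon c' u') * mon d v = mon c u * FPS g * mon (c' * d) (u' @ v)"
    by (simp add: mon_mult mult.assoc)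
  moreover have "valid_word V0 E1 (u' @ v)" using gen by (auto simp: valid_word_def)
  ultimately show ?case using gen J_gen by simp
next
  case (add a b) then show ?case using J_add by (simp add: distrib_right)
qed

lemma J_Val_left: "a \<in> J \<Longrightarrow> f \<in> Val \<Longrightarrow> f * a \<in> J"
proof -
  assume a: "a \<in> J" and f: "f \<in> Val"
  have "f = (\<Sum>w\<in>{w. coeff f w \<noteq> 0}. mon (coeff f w) w)"
    using f by (intro mon_times_sum_support) (simp add: Val_def)
  then have "f * a = (\<Sum>w\<in>{w. coeff f w \<noteq> 0}. mon (coeff f w) w) * a"
    by (rule arg_cong[where f="\<lambda>x. x * a"])
  also have "\<dots> = (\<Sum>w\<in>{w. coeff f w \<noteq> 0}. mon (coeff f w) w * a)"
    by (rule sum_distrib_right)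
  also have "\<dots> \<in> J" using f a by (intro J_sum J_mon_left) (auto simp: Val_def)
  finally show ?thesis .
qed

lemma J_Val_right: "a \<in> J \<Longrightarrow> f \<in> Val \<Longrightarrow> a * f \<in> J"
proof -
  assume a: "a \<in> J" and f: "f \<in> Val"
  have "f = (\<Sum>w\<in>{w. coeff f w \<noteq> 0}. mon (coeff f w) w)"
    using f by (intro mon_times_sum_support) (simp add: Val_def)
  then have "a * f = a * (\<Sum>w\<in>{w. coeff f w \<noteq> 0}. mon (coeff f w) w)"
    by (rule arg_cong[where f="\<lambda>x. a * x"])
  also have "\<dots> = (\<Sum>w\<in>{w. coeff f w \<noteq> 0}. a * mon (coeff f w) w)"
    by (rule sum_distrib_left)
  also have "\<dots> \<in> J" using f a by (intro J_sum J_mon_right) (auto simp: Val_def)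
  finally show ?thesis .
qed

lemma Val_validD: "f \<in> Val \<Longrightarrow> coeff f w \<noteq> 0 \<Longrightarrow> valid_word V0 E1 w"
  by (simp add: Val_def)

lemma Val_0: "0 \<in> Val" by (simp add: Val_def)
lemma Val_add: "a \<in> Val \<Longrightarrow> b \<in> Val \<Longrightarrow> a + b \<in> Val"
proof -
  assume a: "a \<in> Val" and b: "b \<in> Val"
  have sub: "{w. coeff (a + b) w \<noteq> 0} \<subseteq> {w. coeff a w \<noteq> 0} \<union> {w. coeff b w \<noteq> 0}" by auto
  have "finite {w. coeff (a + b) w \<noteq> 0}" using a b unfolding Val_def by (intro finite_subset[OF sub]) auto
  moreover have "\<forall>w. coeff (a + b) w \<noteq> 0 \<longrightarrow> valid_word V0 E1 w"
  proof (intro allI impI)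
    fix w assume "coeff (a + b) w \<noteq> 0"
    then have "coeff a w \<noteq> 0 \<or> coeff b w \<noteq> 0" by auto
    then show "valid_word V0 E1 w" using Val_validD[OF a] Val_validD[OF b] by blast
  qed
  ultimately show ?thesis by (simp add: Val_def)
qed
lemma Val_neg: "a \<in> Val \<Longrightarrow> - a \<in> Val" by (simp add: Val_def)
lemma Val_diff: "a \<in> Val \<Longrightarrow> b \<in> Val \<Longrightarrow> a - b \<in> Val"
  using Val_add[of a "- b"] Val_neg[of b] by (simp add: diff_conv_add_uminus del: add_uminus_conv_diff)
lemma Val_sum: "(\<And>i. i \<in> A \<Longrightarrow> f i \<in> Val) \<Longrightarrow> sum f A \<in> Val"
  by (induction A rule: infinite_finite_induct) (auto simp: Val_0 Val_add)
lemma Val_mon: "valid_word V0 E1 u \<Longrightarrow> mon c u \<in> Val"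
proof -
  assume v: "valid_word V0 E1 u"
  have sub: "{w. coeff (mon c u) w \<noteq> 0} \<subseteq> {u}" by (auto simp: fmono_def)
  have "finite {w. coeff (mon c u) w \<noteq> 0}" by (rule finite_subset[OF sub]) simp
  moreover have "\<forall>w. coeff (mon c u) w \<noteq> 0 \<longrightarrow> valid_word V0 E1 w" using v by (simp add: fmono_def)
  ultimately show ?thesis by (simp add: Val_def)
qed

lemma coeff_mult_nonzero:
  assumes "coeff (a * b) w \<noteq> 0"
  shows "\<exists>k. coeff a (take k w) \<noteq> 0 \<and> coeff b (drop k w) \<noteq> 0"
proof (rule ccontr)
  assume "\<not> ?thesis"
  then have "coeff (a * b) w = (\<Sum>k\<le>length w. 0)"
    unfolding coeff_mult fmult_def by (intro sum.cong refl) (metis mult_zero_left mult_zero_right)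
  then show False using assms by simp
qed

lemma Val_mult: "a \<in> Val \<Longrightarrow> b \<in> Val \<Longrightarrow> a * b \<in> Val"
proof -
  assume a: "a \<in> Val" and b: "b \<in> Val"
  have sub: "{w. coeff (a * b) w \<noteq> 0} \<subseteq> (\<lambda>(x,y). x @ y) ` ({w. coeff a w \<noteq> 0} \<times> {w. coeff b w \<noteq> 0})"
  proof
    fix w assume "w \<in> {w. coeff (a * b) w \<noteq> 0}"
    then have "coeff (a * b) w \<noteq> 0" by simp
    then obtain k where "coeff a (take k w) \<noteq> 0" "coeff b (drop k w) \<noteq> 0"
      using coeff_mult_nonzero[of a b w] by blast
    then show "w \<in> (\<lambda>(x,y). x @ y) ` ({w. coeff a w \<noteq> 0} \<times> {w. coeff b w \<noteq> 0})"
      by (intro image_eqI[of _ _ "(take k w, drop k w)"]) auto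
  qed
  have fin: "finite {w. coeff (a * b) w \<noteq> 0}"
    using a b unfolding Val_def by (intro finite_subset[OF sub] finite_imageI finite_cartesian_product) auto
  have "valid_word V0 E1 w" if nz: "coeff (a * b) w \<noteq> 0" for w
  proof -
    obtain k where k: "coeff a (take k w) \<noteq> 0" "coeff b (drop k w) \<noteq> 0"
      using coeff_mult_nonzero[OF nz] by auto
    have "valid_word V0 E1 (take k w)" using Val_validD[OF a k(1)] .
    moreover have "valid_word V0 E1 (drop k w)" using Val_validD[OF b k(2)] .
    ultimately have "valid_word V0 E1 (take k w @ drop k w)" by (simp only: valid_word_append)
    then show ?thesis by simp
  qed
  then have "\<forall>w. coeff (a * b) w \<noteq> 0 \<longrightarrow> valid_word V0 E1 w" by blast
  then show ?thesis using fin unfolding Val_def by (intro CollectI conjI)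
qed

lemma Val_1: "1 \<in> Val" using Val_mon[of "[]" 1] by (simp add: mon_one valid_word_def)

lemma cong_refl: "a \<in> Val \<Longrightarrow> a \<approx> a" by (simp add: cong_def J_0)
lemma cong_Val: "a \<approx> b \<Longrightarrow> a \<in> Val" "a \<approx> b \<Longrightarrow> b \<in> Val" by (simp_all add: cong_def)
lemma cong_sym: "a \<approx> b \<Longrightarrow> b \<approx> a"
proof -
  assume h: "a \<approx> b"
  have "b - a = - (a - b)" by simp
  then show ?thesis using h J_neg unfolding cong_def by metis
qed
lemma cong_trans: "a \<approx> b \<Longrightarrow> b \<approx> c \<Longrightarrow> a \<approx> c"
proof -
  assume h: "a \<approx> b" "b \<approx> c"
  have "a - c = (a - b) + (b - c)" by simp
  then show ?thesis using h J_add unfolding cong_def by metis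
qed
lemma cong_add: "a \<approx> b \<Longrightarrow> c \<approx> d \<Longrightarrow> a + c \<approx> b + d"
proof -
  assume "a \<approx> b" "c \<approx> d"
  moreover have "a + c - (b + d) = (a - b) + (c - d)" by simp
  ultimately show ?thesis unfolding cong_def using J_add Val_add by metis
qed
lemma cong_neg: "a \<approx> b \<Longrightarrow> - a \<approx> - b"
proof -
  assume h: "a \<approx> b"
  have "- a - - b = - (a - b)" by simp
  then show ?thesis using h J_neg Val_neg unfolding cong_def by metis
qed
lemma cong_diff: "a \<approx> b \<Longrightarrow> c \<approx> d \<Longrightarrow> a - c \<approx> b - d"
  using cong_add[of a b "- c" "- d"] cong_neg[of c d] by (simp add: diff_conv_add_uminus del: add_uminus_conv_diff)
lemma cong_mult: "a \<approx> b \<Longrightarrow> c \<approx> d \<Longrightarrow> a * c \<approx> b * d"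
proof -
  assume ab: "a \<approx> b" and cd: "c \<approx> d"
  have "a * c - b * d = a * (c - d) + (a - b) * d" by (simp add: algebra_simps)
  moreover have "a * (c - d) \<in> J" using ab cd J_Val_left[of "c - d" a] by (simp add: cong_def)
  moreover have "(a - b) * d \<in> J" using ab cd J_Val_right[of "a - b" d] by (simp add: cong_def)
  ultimately have "a * c - b * d \<in> J" using J_add by simp
  then show ?thesis using ab cd Val_mult unfolding cong_def by blast
qed
lemma cong_sum: "(\<And>i. i \<in> A \<Longrightarrow> f i \<approx> g i) \<Longrightarrow> sum f A \<approx> sum g A"
  by (induction A rule: infinite_finite_induct) (auto simp: cong_refl Val_0 cong_add)
lemma cong_eq_trans: "a \<approx> b \<Longrightarrow> b = c \<Longrightarrow> a \<approx> c" by simp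
lemma eq_cong_trans: "a = b \<Longrightarrow> b \<approx> c \<Longrightarrow> a \<approx> c" by simp

lemma cong_rel: "g \<in> LPA_rels V0 E1 rg sc \<Longrightarrow> FPS g \<in> J"
  using J_gen[of g "[]" "[]" 1 1] by (simp add: mon_one valid_word_def)

end


fun pth :: "'v set \<Rightarrow> 'e set \<Rightarrow> ('e \<Rightarrow> 'v) \<Rightarrow> ('e \<Rightarrow> 'v) \<Rightarrow> 'v \<Rightarrow> 'e list \<Rightarrow> bool" where
  "pth V0 E1 rg sc v [] = (v \<in> V0)"
| "pth V0 E1 rg sc v (e # es) = (v \<in> V0 \<and> e \<in> E1 \<and> sc e = v \<and> pth V0 E1 rg sc (rg e) es)"

fun rend :: "('e \<Rightarrow> 'v) \<Rightarrow> 'v \<Rightarrow> 'e list \<Rightarrow> 'v" where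
  "rend rg v [] = v"
| "rend rg v (e # es) = rend rg (rg e) es"


lemma rend_append: "rend rg v (es @ ks) = rend rg (rend rg v es) ks"
  by (induction es arbitrary: v) auto

lemma pth_V0: "pth V0 E1 rg sc v es \<Longrightarrow> v \<in> V0"
  by (cases es) auto

lemma pth_append: "pth V0 E1 rg sc v (es @ ks) \<longleftrightarrow> pth V0 E1 rg sc v es \<and> pth V0 E1 rg sc (rend rg v es) ks"
  by (induction es arbitrary: v) (auto dest: pth_V0)

type_synonym ('v,'e,'r) L = "(('v,'e) gen, 'r) fps"

locale lpar = lpa V0 E1 rg sc for V0 :: "'v set" and E1 :: "'e set" and rg sc :: "'e \<Rightarrow> 'v" +
  fixes rty :: "'r::ring_1 itself"
begin

lemmas cong_trans_rules[trans] = cong_trans cong_eq_trans eq_cong_trans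

definition Vt :: "'v \<Rightarrow> ('v,'e,'r) L" where "Vt v = mon 1 [Vx v]"
definition Ee :: "'e \<Rightarrow> ('v,'e,'r) L" where "Ee e = mon 1 [Ed e]"
definition Gg :: "'e \<Rightarrow> ('v,'e,'r) L" where "Gg e = mon 1 [Gh e]"
definition Ep :: "'e list \<Rightarrow> ('v,'e,'r) L" where "Ep es = mon 1 (map Ed es)"
definition Gp :: "'e list \<Rightarrow> ('v,'e,'r) L" where "Gp es = mon 1 (rev (map Gh es))"
definition P :: "'v \<Rightarrow> 'e list \<Rightarrow> ('v,'e,'r) L" where "P v es = Vt v * Ep es"
definition G :: "'v \<Rightarrow> 'e list \<Rightarrow> ('v,'e,'r) L" where "G v es = Gp es * Vt v"

lemma Ep_Nil[simp]: "Ep [] = 1" by (simp add: Ep_def mon_one)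
lemma Gp_Nil[simp]: "Gp [] = 1" by (simp add: Gp_def mon_one)
lemma Ep_Cons: "Ep (e # es) = Ee e * Ep es" by (simp add: Ep_def Ee_def mon_mult)
lemma Gp_Cons: "Gp (e # es) = Gp es * Gg e" by (simp add: Gp_def Gg_def mon_mult)
lemma Ep_append: "Ep (es @ ks) = Ep es * Ep ks" by (simp add: Ep_def mon_mult)
lemma Gp_append: "Gp (es @ ks) = Gp ks * Gp es" by (simp add: Gp_def mon_mult)

lemma Cen_Vt: "Cen (Vt v)" by (simp add: Vt_def Cen_mon1)
lemma Cen_Ee: "Cen (Ee v)" by (simp add: Ee_def Cen_mon1)
lemma Cen_Gg: "Cen (Gg v)" by (simp add: Gg_def Cen_mon1)
lemma Cen_Ep: "Cen (Ep v)" by (simp add: Ep_def Cen_mon1)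
lemma Cen_Gp: "Cen (Gp v)" by (simp add: Gp_def Cen_mon1)
lemma Cen_P: "Cen (P v es)" by (simp add: P_def Cen_mult Cen_Vt Cen_Ep)
lemma Cen_G: "Cen (G v es)" by (simp add: G_def Cen_mult Cen_Vt Cen_Gp)

lemma Val_Vt: "v \<in> V0 \<Longrightarrow> Vt v \<in> Val" by (simp add: Vt_def Val_mon valid_word_def gen_in_def)
lemma Val_Ee: "e \<in> E1 \<Longrightarrow> Ee e \<in> Val" by (simp add: Ee_def Val_mon valid_word_def gen_in_def)
lemma Val_Gg: "e \<in> E1 \<Longrightarrow> Gg e \<in> Val" by (simp add: Gg_def Val_mon valid_word_def gen_in_def)
lemma Val_Ep: "set es \<subseteq> E1 \<Longrightarrow> Ep es \<in> Val" by (unfold Ep_def, intro Val_mon) (auto simp: valid_word_def gen_in_def)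
lemma Val_Gp: "set es \<subseteq> E1 \<Longrightarrow> Gp es \<in> Val" by (unfold Gp_def, intro Val_mon) (auto simp: valid_word_def gen_in_def)

lemma pth_edges: "pth V0 E1 rg sc v es \<Longrightarrow> set es \<subseteq> E1"
  by (induction es arbitrary: v) auto
lemma pth_rend: "pth V0 E1 rg sc v es \<Longrightarrow> rend rg v es \<in> V0"
  by (induction es arbitrary: v) auto

lemma Val_P: "pth V0 E1 rg sc v es \<Longrightarrow> P v es \<in> Val"
  by (simp add: P_def Val_mult Val_Vt Val_Ep pth_edges pth_V0)
lemma Val_G: "pth V0 E1 rg sc v es \<Longrightarrow> G v es \<in> Val"
  by (simp add: G_def Val_mult Val_Vt Val_Gp pth_edges pth_V0)

lemma FPS_fdiff: "FPS (fdiff f g) = FPS f - FPS g" by (simp add: fdiff_def minus_fps_def)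
lemma FPS_fmono: "FPS (fmono c u) = mon c u" by (simp add: mon_def)
lemma FPS_zero: "FPS (\<lambda>_. 0) = 0" by (simp add: zero_fps_def)

lemma rel_cong: "fdiff f g \<in> LPA_rels V0 E1 rg sc \<Longrightarrow> FPS f \<in> Val \<Longrightarrow> FPS g \<in> Val \<Longrightarrow> FPS f \<approx> FPS g"
  using cong_rel[of "fdiff f g"] by (simp add: cong_def FPS_fdiff)

lemma R_VV: "v \<in> V0 \<Longrightarrow> v' \<in> V0 \<Longrightarrow> (Vt v :: ('v,'e,'r) L) * Vt v' \<approx> (if v = v' then Vt v else 0)"
proof -
  assume v: "v \<in> V0" "v' \<in> V0"
  let ?f = "fmono (1::'r) [Vx v, Vx v']"
  let ?g = "if v = v' then fmono (1::'r) [Vx v] else (\<lambda>_. 0)"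
  have "fdiff ?f ?g \<in> LPA_rels V0 E1 rg sc" unfolding LPA_rels_def using v by blast
  moreover have "FPS ?f = Vt v * Vt v'" by (simp add: Vt_def mon_mult FPS_fmono)
  moreover have "FPS ?g = (if v = v' then Vt v else 0)" by (simp add: Vt_def FPS_fmono FPS_zero)
  moreover have "Vt v * Vt v' \<in> Val" using v by (simp add: Val_mult Val_Vt)
  moreover have "(if v = v' then Vt v else 0) \<in> Val" using v by (simp add: Val_Vt Val_0)
  ultimately show ?thesis using rel_cong[of ?f ?g] by (simp only:)
qed

lemma R_sE: "e \<in> E1 \<Longrightarrow> (Vt (sc e) :: ('v,'e,'r) L) * Ee e \<approx> Ee e"
proof -
  assume e: "e \<in> E1"
  let ?f = "fmono (1::'r) [Vx (sc e), Ed e]" and ?g = "fmono (1::'r) [Ed e]"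
  have "fdiff ?f ?g \<in> LPA_rels V0 E1 rg sc" unfolding LPA_rels_def using e by blast
  moreover have "FPS ?f = Vt (sc e) * Ee e" by (simp add: Vt_def Ee_def mon_mult FPS_fmono)
  moreover have "FPS ?g = Ee e" by (simp add: Ee_def FPS_fmono)
  moreover have "Vt (sc e) * Ee e \<in> Val" using e edges_ok by (simp add: Val_mult Val_Vt Val_Ee)
  moreover have "Ee e \<in> Val" using e by (simp add: Val_Ee)
  ultimately show ?thesis using rel_cong[of ?f ?g] by (simp only:)
qed

lemma R_Er: "e \<in> E1 \<Longrightarrow> (Ee e :: ('v,'e,'r) L) * Vt (rg e) \<approx> Ee e"
proof -
  assume e: "e \<in> E1"
  let ?f = "fmono (1::'r) [Ed e, Vx (rg e)]" and ?g = "fmono (1::'r) [Ed e]"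
  have "fdiff ?f ?g \<in> LPA_rels V0 E1 rg sc" unfolding LPA_rels_def using e by blast
  moreover have "FPS ?f = Ee e * Vt (rg e)" by (simp add: Vt_def Ee_def mon_mult FPS_fmono)
  moreover have "FPS ?g = Ee e" by (simp add: Ee_def FPS_fmono)
  moreover have "Ee e * Vt (rg e) \<in> Val" using e edges_ok by (simp add: Val_mult Val_Vt Val_Ee)
  moreover have "Ee e \<in> Val" using e by (simp add: Val_Ee)
  ultimately show ?thesis using rel_cong[of ?f ?g] by (simp only:)
qed

lemma R_rG: "e \<in> E1 \<Longrightarrow> (Vt (rg e) :: ('v,'e,'r) L) * Gg e \<approx> Gg e"
proof -
  assume e: "e \<in> E1"
  let ?f = "fmono (1::'r) [Vx (rg e), Gh e]" and ?g = "fmono (1::'r) [Gh e]"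
  have "fdiff ?f ?g \<in> LPA_rels V0 E1 rg sc" unfolding LPA_rels_def using e by blast
  moreover have "FPS ?f = Vt (rg e) * Gg e" by (simp add: Vt_def Gg_def mon_mult FPS_fmono)
  moreover have "FPS ?g = Gg e" by (simp add: Gg_def FPS_fmono)
  moreover have "Vt (rg e) * Gg e \<in> Val" using e edges_ok by (simp add: Val_mult Val_Vt Val_Gg)
  moreover have "Gg e \<in> Val" using e by (simp add: Val_Gg)
  ultimately show ?thesis using rel_cong[of ?f ?g] by (simp only:)
qed

lemma R_Gs: "e \<in> E1 \<Longrightarrow> (Gg e :: ('v,'e,'r) L) * Vt (sc e) \<approx> Gg e"
proof -
  assume e: "e \<in> E1"
  let ?f = "fmono (1::'r) [Gh e, Vx (sc e)]" and ?g = "fmono (1::'r) [Gh e]"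
  have "fdiff ?f ?g \<in> LPA_rels V0 E1 rg sc" unfolding LPA_rels_def using e by blast
  moreover have "FPS ?f = Gg e * Vt (sc e)" by (simp add: Vt_def Gg_def mon_mult FPS_fmono)
  moreover have "FPS ?g = Gg e" by (simp add: Gg_def FPS_fmono)
  moreover have "Gg e * Vt (sc e) \<in> Val" using e edges_ok by (simp add: Val_mult Val_Vt Val_Gg)
  moreover have "Gg e \<in> Val" using e by (simp add: Val_Gg)
  ultimately show ?thesis using rel_cong[of ?f ?g] by (simp only:)
qed

lemma R_GE: "e \<in> E1 \<Longrightarrow> e' \<in> E1 \<Longrightarrow> (Gg e :: ('v,'e,'r) L) * Ee e' \<approx> (if e = e' then Vt (rg e) else 0)"
proof -
  assume e: "e \<in> E1" "e' \<in> E1"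
  let ?f = "fmono (1::'r) [Gh e, Ed e']"
  let ?g = "if e = e' then fmono (1::'r) [Vx (rg e)] else (\<lambda>_. 0)"
  have "fdiff ?f ?g \<in> LPA_rels V0 E1 rg sc" unfolding LPA_rels_def using e by blast
  moreover have "FPS ?f = Gg e * Ee e'" by (simp add: Gg_def Ee_def mon_mult FPS_fmono)
  moreover have "FPS ?g = (if e = e' then Vt (rg e) else 0)" by (simp add: Vt_def FPS_fmono FPS_zero)
  moreover have "Gg e * Ee e' \<in> Val" using e by (simp add: Val_mult Val_Gg Val_Ee)
  moreover have "(if e = e' then Vt (rg e) else 0) \<in> Val" using e edges_ok by (simp add: Val_Vt Val_0)
  ultimately show ?thesis using rel_cong[of ?f ?g] by (simp only:)
qed

lemma cong_mult_left: "c \<in> Val \<Longrightarrow> a \<approx> b \<Longrightarrow> c * a \<approx> c * b"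
  using cong_mult cong_refl by blast
lemma cong_mult_right: "c \<in> Val \<Longrightarrow> a \<approx> b \<Longrightarrow> a * c \<approx> b * c"
  using cong_mult cong_refl by blast

end


context lpar
begin

lemma cong_ctx: "A \<in> Val \<Longrightarrow> B \<in> Val \<Longrightarrow> X \<approx> Y \<Longrightarrow> A * X * B \<approx> A * Y * B"
  using cong_mult_left cong_mult_right Val_mult cong_Val by metis

lemma cong_zero_left: "X \<approx> 0 \<Longrightarrow> B \<in> Val \<Longrightarrow> X * B \<approx> 0"
  using cong_mult_right[of B X 0] by simp
lemma cong_zero_right: "X \<approx> 0 \<Longrightarrow> B \<in> Val \<Longrightarrow> B * X \<approx> 0"
  using cong_mult_left[of B X 0] by simp

abbreviation "path \<equiv> pth V0 E1 rg sc"

lemma P_Nil: "P v [] = Vt v" by (simp add: P_def)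
lemma G_Nil: "G v [] = Vt v" by (simp add: G_def)

lemma Vt_idem: "v \<in> V0 \<Longrightarrow> Vt v * Vt v \<approx> Vt v"
  using R_VV[of v v] by simp

lemma P_Cons_cong:
  assumes "path v (e # es)"
  shows "P v (e # es) \<approx> Vt v * Ee e * P (rg e) es"
proof -
  have e: "e \<in> E1" "sc e = v" "path (rg e) es" using assms by auto
  have vals: "Vt v \<in> Val" "Ep es \<in> Val" "Ee e \<in> Val"
    using assms e by (auto simp: Val_Vt Val_Ep Val_Ee pth_edges)
  have "P v (e # es) = Vt v * Ee e * Ep es" by (simp add: P_def Ep_Cons mult.assoc)
  also have "\<dots> \<approx> Vt v * (Ee e * Vt (rg e)) * Ep es"
    using vals e cong_sym[OF R_Er[OF e(1)]] by (intro cong_ctx) auto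
  also have "\<dots> = Vt v * Ee e * P (rg e) es" by (simp add: P_def mult.assoc)
  finally show ?thesis .
qed

lemma G_Cons_cong:
  assumes "path v (e # es)"
  shows "G v (e # es) \<approx> G (rg e) es * Gg e * Vt v"
proof -
  have e: "e \<in> E1" "sc e = v" "path (rg e) es" using assms by auto
  have vals: "Vt v \<in> Val" "Gp es \<in> Val" "Gg e \<in> Val"
    using assms e by (auto simp: Val_Vt Val_Gp Val_Gg pth_edges)
  have "G v (e # es) = Gp es * Gg e * Vt v" by (simp add: G_def Gp_Cons mult.assoc)
  also have "\<dots> \<approx> Gp es * (Vt (rg e) * Gg e) * Vt v"
    using vals e cong_sym[OF R_rG[OF e(1)]] by (intro cong_ctx) auto
  also have "\<dots> = G (rg e) es * Gg e * Vt v" by (simp add: G_def mult.assoc)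
  finally show ?thesis .
qed

lemma Vt_P: "path v es \<Longrightarrow> Vt v * P v es \<approx> P v es"
proof -
  assume p: "path v es"
  have v: "v \<in> V0" using pth_V0[OF p] .
  have "Vt v * P v es = 1 * (Vt v * Vt v) * Ep es" by (simp add: P_def mult.assoc)
  also have "\<dots> \<approx> 1 * Vt v * Ep es" using v p by (intro cong_ctx Vt_idem) (auto simp: Val_1 Val_Ep pth_edges)
  also have "\<dots> = P v es" by (simp add: P_def)
  finally show ?thesis .
qed

lemma G_Vt: "path v es \<Longrightarrow> G v es * Vt v \<approx> G v es"
proof -
  assume p: "path v es"
  have v: "v \<in> V0" using pth_V0[OF p] .
  have "G v es * Vt v = Gp es * (Vt v * Vt v) * 1" by (simp add: G_def mult.assoc)
  also have "\<dots> \<approx> Gp es * Vt v * 1" using v p by (intro cong_ctx Vt_idem) (auto simp: Val_1 Val_Gp pth_edges)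
  also have "\<dots> = G v es" by (simp add: G_def)
  finally show ?thesis .
qed

lemma P_Vt_end: "path v es \<Longrightarrow> P v es * Vt (rend rg v es) \<approx> P v es"
proof (induction es arbitrary: v)
  case Nil
  then show ?case using Vt_idem[of v] by (simp add: P_def)
next
  case (Cons e es)
  have e: "e \<in> E1" "sc e = v" "path (rg e) es" "v \<in> V0" using Cons.prems by auto
  have vals: "Vt v \<in> Val" "Ee e \<in> Val" "Vt (rend rg (rg e) es) \<in> Val"
    using e Cons.prems by (auto simp: Val_Vt Val_Ee pth_rend)
  have "P v (e # es) * Vt (rend rg v (e # es)) \<approx> Vt v * Ee e * P (rg e) es * Vt (rend rg (rg e) es)"
    using cong_mult_right[OF vals(3) P_Cons_cong[OF Cons.prems]] by simp
  also have "\<dots> = Vt v * Ee e * (P (rg e) es * Vt (rend rg (rg e) es)) * 1" by (simp add: mult.assoc)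
  also have "\<dots> \<approx> Vt v * Ee e * P (rg e) es * 1"
    using Cons.IH[OF e(3)] vals by (intro cong_ctx) (auto simp: Val_1 Val_mult)
  also have "\<dots> \<approx> P v (e # es)" using P_Cons_cong[OF Cons.prems] by (simp add: cong_sym)
  finally show ?case .
qed

lemma Vt_G_end: "path v es \<Longrightarrow> Vt (rend rg v es) * G v es \<approx> G v es"
proof (induction es arbitrary: v)
  case Nil
  then show ?case using Vt_idem[of v] by (simp add: G_def)
next
  case (Cons e es)
  have e: "e \<in> E1" "sc e = v" "path (rg e) es" "v \<in> V0" using Cons.prems by auto
  have vals: "Vt v \<in> Val" "Gg e \<in> Val" "Vt (rend rg (rg e) es) \<in> Val"
    using e Cons.prems by (auto simp: Val_Vt Val_Gg pth_rend)
  have "Vt (rend rg v (e # es)) * G v (e # es) \<approx> Vt (rend rg (rg e) es) * (G (rg e) es * Gg e * Vt v)"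
    using cong_mult_left[OF vals(3) G_Cons_cong[OF Cons.prems]] by simp
  also have "\<dots> = 1 * (Vt (rend rg (rg e) es) * G (rg e) es) * (Gg e * Vt v)" by (simp add: mult.assoc)
  also have "\<dots> \<approx> 1 * G (rg e) es * (Gg e * Vt v)"
    using Cons.IH[OF e(3)] vals by (intro cong_ctx) (auto simp: Val_1 Val_mult)
  also have "\<dots> \<approx> G v (e # es)" using G_Cons_cong[OF Cons.prems] by (simp add: cong_sym mult.assoc)
  finally show ?case .
qed

lemma GP_base_left:
  assumes "v \<in> V0" "path v' es'"
  shows "G v [] * P v' es' \<approx> (if v = v' then P v es' else 0)"
proof -
  have v': "v' \<in> V0" using pth_V0 assms by metis
  have "G v [] * P v' es' = 1 * (Vt v * Vt v') * Ep es'" by (simp add: G_def P_def mult.assoc)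
  also have "\<dots> \<approx> 1 * (if v = v' then Vt v else 0) * Ep es'"
    using assms v' by (intro cong_ctx R_VV) (auto simp: Val_1 Val_Ep pth_edges)
  also have "\<dots> = (if v = v' then P v es' else 0)" by (simp add: P_def)
  finally show ?thesis .
qed

lemma GP_base_right:
  assumes "path v es" "v' \<in> V0"
  shows "G v es * P v' [] \<approx> (if v = v' then G v es else 0)"
proof -
  have v: "v \<in> V0" using pth_V0 assms by metis
  have "G v es * P v' [] = Gp es * (Vt v * Vt v') * 1" by (simp add: G_def P_def mult.assoc)
  also have "\<dots> \<approx> Gp es * (if v = v' then Vt v else 0) * 1"
    using assms v by (intro cong_ctx R_VV) (auto simp: Val_1 Val_Gp pth_edges)
  also have "\<dots> = (if v = v' then G v es else 0)" by (simp add: G_def)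
  finally show ?thesis .
qed

lemma GP_step:
  assumes "path v (e # es)" "path v' (e' # es')"
  shows "G v (e # es) * P v' (e' # es') \<approx> (if e = e' then G (rg e) es * P (rg e) es' else 0)"
proof -
  have e: "e \<in> E1" "sc e = v" "path (rg e) es" "v \<in> V0" using assms(1) by auto
  have e': "e' \<in> E1" "sc e' = v'" "path (rg e') es'" "v' \<in> V0" using assms(2) by auto
  have vals: "G (rg e) es \<in> Val" "P (rg e') es' \<in> Val" "Gg e \<in> Val" "Ee e' \<in> Val" "Vt v \<in> Val" "Vt v' \<in> Val"
    using e e' by (auto simp: Val_G Val_P Val_Gg Val_Ee Val_Vt)
  have "G v (e # es) * P v' (e' # es') \<approx> (G (rg e) es * Gg e * Vt v) * (Vt v' * Ee e' * P (rg e') es')"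
    by (rule cong_mult[OF G_Cons_cong[OF assms(1)] P_Cons_cong[OF assms(2)]])
  also have "\<dots> = G (rg e) es * (Gg e * Vt v) * (Vt v' * Ee e' * P (rg e') es')" by (simp add: mult.assoc)
  also have "\<dots> \<approx> G (rg e) es * Gg e * (Vt v' * Ee e' * P (rg e') es')"
    using vals e R_Gs[OF e(1)] by (intro cong_ctx) (auto simp: Val_mult)
  also have "\<dots> = G (rg e) es * Gg e * (Vt v' * Ee e') * P (rg e') es'" by (simp add: mult.assoc)
  also have "\<dots> \<approx> G (rg e) es * Gg e * Ee e' * P (rg e') es'"
    using vals e' R_sE[OF e'(1)] by (intro cong_ctx) (auto simp: Val_mult)
  also have "\<dots> = G (rg e) es * (Gg e * Ee e') * P (rg e') es'" by (simp add: mult.assoc)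
  also have "\<dots> \<approx> G (rg e) es * (if e = e' then Vt (rg e) else 0) * P (rg e') es'"
    using vals e e' by (intro cong_ctx R_GE) auto
  also have "\<dots> \<approx> (if e = e' then G (rg e) es * P (rg e) es' else 0)"
  proof (cases "e = e'")
    case True
    have "G (rg e) es * Vt (rg e) * P (rg e) es' = G (rg e) es * (Vt (rg e) * P (rg e) es') * 1"
      by (simp add: mult.assoc)
    also have "\<dots> \<approx> G (rg e) es * P (rg e) es' * 1"
      using vals True e' by (intro cong_ctx Vt_P) (auto simp: Val_1)
    finally show ?thesis using True by simp
  next
    case False
    then show ?thesis using cong_refl[OF Val_0] by simp
  qed
  finally show ?thesis .
qed

lemma GP_pre:
  "path v (es @ ks) \<Longrightarrow> G v es * P v (es @ ks) \<approx> P (rend rg v es) ks"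
proof (induction es arbitrary: v)
  case Nil
  then show ?case using GP_base_left[of v v ks] by (simp add: pth_V0)
next
  case (Cons e es)
  have e: "path (rg e) (es @ ks)" "path v (e # es)" using Cons.prems by (auto simp: pth_append)
  have "path v (e # (es @ ks))" using Cons.prems by simp
  from GP_step[OF e(2) this]
  have "G v (e # es) * P v (e # (es @ ks)) \<approx> G (rg e) es * P (rg e) (es @ ks)" by simp
  also have "\<dots> \<approx> P (rend rg (rg e) es) ks" using Cons.IH[OF e(1)] .
  finally show ?case by simp
qed

lemma GP_pre2:
  "path v (es @ ks) \<Longrightarrow> G v (es @ ks) * P v es \<approx> G (rend rg v es) ks"
proof (induction es arbitrary: v)
  case Nil
  then show ?case using GP_base_right[of v ks v] by (simp add: pth_V0)
next
  case (Cons e es)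
  have e: "path (rg e) (es @ ks)" "path v (e # es)" using Cons.prems by (auto simp: pth_append)
  have "path v (e # (es @ ks))" using Cons.prems by simp
  from GP_step[OF this e(2)]
  have "G v (e # (es @ ks)) * P v (e # es) \<approx> G (rg e) (es @ ks) * P (rg e) es" by simp
  also have "\<dots> \<approx> G (rend rg (rg e) es) ks" using Cons.IH[OF e(1)] .
  finally show ?case by simp
qed

lemma GP_inc:
  "path v es \<Longrightarrow> path v' es' \<Longrightarrow> \<not> (v = v' \<and> ((\<exists>ks. es' = es @ ks) \<or> (\<exists>ks. es = es' @ ks)))
   \<Longrightarrow> G v es * P v' es' \<approx> 0"
proof (induction es arbitrary: v v' es')
  case Nil
  then show ?case using GP_base_left[of v v' es'] by (auto simp: pth_V0)
next
  case (Cons e es)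
  show ?case
  proof (cases es')
    case Nil
    then show ?thesis using Cons.prems GP_base_right[of v "e # es" v'] by (auto simp: pth_V0)
  next
    case (Cons e' es'')
    note es' = this
    have c1: "path v (e # es)" "path v' (e' # es'')" using Cons.prems es' by auto
    show ?thesis
    proof (cases "e = e'")
      case False
      then show ?thesis using GP_step[OF c1] es' by simp
    next
      case True
      have "v = v'" using c1 True by auto
      then have "\<not> (rg e = rg e \<and> ((\<exists>ks. es'' = es @ ks) \<or> (\<exists>ks. es = es'' @ ks)))"
        using Cons.prems(3) es' True by auto
      then have "G (rg e) es * P (rg e) es'' \<approx> 0"
        using Cons.IH[of "rg e" "rg e" es''] c1 True by auto
      then show ?thesis using GP_step[OF c1] es' True cong_trans by fastforce
    qed
  qed
qed

end


locale lparF = lpar V0 E1 rg sc rty for V0 :: "'v set" and E1 :: "'e set" and rg sc :: "'e \<Rightarrow> 'v"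
  and rty :: "'r::ring_1 itself" +
  fixes F :: "'e set"
  assumes finF: "finite F" and FE: "F \<subseteq> E1"
begin

definition S :: "'v \<Rightarrow> ('v,'e,'r) L" where
  "S w = (\<Sum>e\<in>{e\<in>F. sc e = w}. Ee e * Gg e)"
definition g :: "'v \<Rightarrow> ('v,'e,'r) L" where
  "g w = Vt w - S w"

lemma finFw: "finite {e\<in>F. sc e = w}" using finF by simp

lemma Val_S: "S w \<in> Val"
  unfolding S_def using FE by (intro Val_sum Val_mult) (auto simp: Val_Ee Val_Gg)
lemma Val_g: "w \<in> V0 \<Longrightarrow> g w \<in> Val"
  unfolding g_def by (intro Val_diff Val_S Val_Vt)
lemma Cen_S: "Cen (S w)"
  unfolding S_def by (intro Cen_sum Cen_mult) (auto simp: Cen_Ee Cen_Gg)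
lemma Cen_g: "Cen (g w)"
  unfolding g_def by (intro Cen_diff Cen_S Cen_Vt)

lemma Vt_S: "w \<in> V0 \<Longrightarrow> Vt w * S w \<approx> S w"
proof -
  assume w: "w \<in> V0"
  have "Vt w * S w = (\<Sum>e\<in>{e\<in>F. sc e = w}. Vt w * Ee e * Gg e)"
    by (simp add: S_def sum_distrib_left mult.assoc)
  also have "\<dots> \<approx> (\<Sum>e\<in>{e\<in>F. sc e = w}. Ee e * Gg e)"
  proof (rule cong_sum)
    fix e assume e: "e \<in> {e\<in>F. sc e = w}"
    then have "e \<in> E1" using FE by auto
    then show "Vt w * Ee e * Gg e \<approx> Ee e * Gg e"
      using e R_sE[of e] by (intro cong_mult_right) (auto simp: Val_Gg)
  qed
  finally show ?thesis by (simp add: S_def)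
qed

lemma S_Vt: "w \<in> V0 \<Longrightarrow> S w * Vt w \<approx> S w"
proof -
  assume w: "w \<in> V0"
  have "S w * Vt w = (\<Sum>e\<in>{e\<in>F. sc e = w}. Ee e * (Gg e * Vt w))"
    by (simp add: S_def sum_distrib_right mult.assoc)
  also have "\<dots> \<approx> (\<Sum>e\<in>{e\<in>F. sc e = w}. Ee e * Gg e)"
  proof (rule cong_sum)
    fix e assume e: "e \<in> {e\<in>F. sc e = w}"
    then have "e \<in> E1" using FE by auto
    then show "Ee e * (Gg e * Vt w) \<approx> Ee e * Gg e"
      using e R_Gs[of e] by (intro cong_mult_left) (auto simp: Val_Ee)
  qed
  finally show ?thesis by (simp add: S_def)
qed

lemma Vt_g: "w \<in> V0 \<Longrightarrow> Vt w * g w \<approx> g w"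
proof -
  assume w: "w \<in> V0"
  have "Vt w * g w = Vt w * Vt w - Vt w * S w" by (simp add: g_def right_diff_distrib)
  also have "\<dots> \<approx> Vt w - S w" using w by (intro cong_diff Vt_idem Vt_S)
  finally show ?thesis by (simp add: g_def)
qed

lemma g_Vt: "w \<in> V0 \<Longrightarrow> g w * Vt w \<approx> g w"
proof -
  assume w: "w \<in> V0"
  have "g w * Vt w = Vt w * Vt w - S w * Vt w" by (simp add: g_def left_diff_distrib)
  also have "\<dots> \<approx> Vt w - S w" using w by (intro cong_diff Vt_idem S_Vt)
  finally show ?thesis by (simp add: g_def)
qed

lemma S_E: "e \<in> F \<Longrightarrow> sc e = w \<Longrightarrow> S w * Ee e \<approx> Ee e"
proof -
  assume e: "e \<in> F" "sc e = w"
  have eE: "e \<in> E1" using e FE by auto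
  have "S w * Ee e = (\<Sum>e'\<in>{e\<in>F. sc e = w}. Ee e' * (Gg e' * Ee e))"
    by (simp add: S_def sum_distrib_right mult.assoc)
  also have "\<dots> \<approx> (\<Sum>e'\<in>{e\<in>F. sc e = w}. Ee e' * (if e' = e then Vt (rg e') else 0))"
  proof (rule cong_sum)
    fix e' assume e': "e' \<in> {e\<in>F. sc e = w}"
    then have "e' \<in> E1" using FE by auto
    then show "Ee e' * (Gg e' * Ee e) \<approx> Ee e' * (if e' = e then Vt (rg e') else 0)"
      using R_GE[of e' e] eE by (intro cong_mult_left) (auto simp: Val_Ee)
  qed
  also have "\<dots> = (\<Sum>e'\<in>{e\<in>F. sc e = w}. if e' = e then Ee e' * Vt (rg e') else 0)"
    by (intro sum.cong) auto
  also have "\<dots> = Ee e * Vt (rg e)" using e finFw[of w] by (simp add: sum.delta)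
  also have "\<dots> \<approx> Ee e" using R_Er eE by simp
  finally show ?thesis .
qed

lemma G_S: "e \<in> F \<Longrightarrow> sc e = w \<Longrightarrow> Gg e * S w \<approx> Gg e"
proof -
  assume e: "e \<in> F" "sc e = w"
  have eE: "e \<in> E1" using e FE by auto
  have "Gg e * S w = (\<Sum>e'\<in>{e\<in>F. sc e = w}. (Gg e * Ee e') * Gg e')"
    by (simp add: S_def sum_distrib_left mult.assoc)
  also have "\<dots> \<approx> (\<Sum>e'\<in>{e\<in>F. sc e = w}. (if e = e' then Vt (rg e) else 0) * Gg e')"
  proof (rule cong_sum)
    fix e' assume e': "e' \<in> {e\<in>F. sc e = w}"
    then have "e' \<in> E1" using FE by auto
    then show "(Gg e * Ee e') * Gg e' \<approx> (if e = e' then Vt (rg e) else 0) * Gg e'"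
      using R_GE[of e e'] eE by (intro cong_mult_right) (auto simp: Val_Gg)
  qed
  also have "\<dots> = (\<Sum>e'\<in>{e\<in>F. sc e = w}. if e = e' then Vt (rg e) * Gg e else 0)"
    by (intro sum.cong) auto
  also have "\<dots> = Vt (rg e) * Gg e" using e finFw[of w] by (simp add: sum.delta')
  also have "\<dots> \<approx> Gg e" using R_rG eE by simp
  finally show ?thesis .
qed

lemma g_E: "e \<in> F \<Longrightarrow> sc e = w \<Longrightarrow> g w * Ee e \<approx> 0"
proof -
  assume e: "e \<in> F" "sc e = w"
  have eE: "e \<in> E1" using e FE by auto
  have "g w * Ee e = Vt w * Ee e - S w * Ee e" by (simp add: g_def left_diff_distrib)
  also have "\<dots> \<approx> Ee e - Ee e" using e eE R_sE[of e] by (intro cong_diff S_E) auto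
  finally show ?thesis by simp
qed

lemma Gg_g: "e \<in> F \<Longrightarrow> sc e = w \<Longrightarrow> Gg e * g w \<approx> 0"
proof -
  assume e: "e \<in> F" "sc e = w"
  have eE: "e \<in> E1" using e FE by auto
  have "Gg e * g w = Gg e * Vt w - Gg e * S w" by (simp add: g_def right_diff_distrib)
  also have "\<dots> \<approx> Gg e - Gg e" using e eE R_Gs[of e] by (intro cong_diff G_S) auto
  finally show ?thesis by simp
qed

lemma g_idem: "w \<in> V0 \<Longrightarrow> g w * g w \<approx> g w"
proof -
  assume w: "w \<in> V0"
  have "g w * g w = g w * Vt w - (\<Sum>e\<in>{e\<in>F. sc e = w}. g w * Ee e * Gg e)"
    by (simp add: g_def[of w] right_diff_distrib S_def sum_distrib_left mult.assoc)
  also have "\<dots> \<approx> g w - (\<Sum>e\<in>{e\<in>F. sc e = w}. 0)"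
  proof (rule cong_diff)
    show "g w * Vt w \<approx> g w" using g_Vt w .
    show "(\<Sum>e\<in>{e\<in>F. sc e = w}. g w * Ee e * Gg e) \<approx> (\<Sum>e\<in>{e\<in>F. sc e = w}. 0)"
    proof (rule cong_sum)
      fix e assume e: "e \<in> {e\<in>F. sc e = w}"
      then have "e \<in> E1" using FE by auto
      moreover have "g w * Ee e \<approx> 0" using e by (intro g_E) auto
      ultimately show "g w * Ee e * Gg e \<approx> 0" using cong_zero_left Val_Gg by blast
    qed
  qed
  finally show ?thesis by simp
qed

lemma g_P: "e \<in> F \<Longrightarrow> path w (e # ks) \<Longrightarrow> g w * P w (e # ks) \<approx> 0"
proof -
  assume e: "e \<in> F" and p: "path w (e # ks)"
  have e2: "sc e = w" "w \<in> V0" "e \<in> E1" "path (rg e) ks" using p by auto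
  have "g w * P w (e # ks) \<approx> g w * (Vt w * Ee e * P (rg e) ks)"
    using P_Cons_cong[OF p] e2 by (intro cong_mult_left Val_g)
  also have "\<dots> = (g w * Vt w) * Ee e * P (rg e) ks" by (simp add: mult.assoc)
  also have "\<dots> \<approx> g w * Ee e * P (rg e) ks"
    using e2 g_Vt[of w] by (intro cong_mult_right) (auto simp: Val_Ee Val_P)
  also have "\<dots> \<approx> 0"
    using e2 e cong_zero_left[OF g_E[of e w] Val_P[of "rg e" ks]] by auto
  finally show ?thesis .
qed

lemma G_g: "e \<in> F \<Longrightarrow> path w (e # ks) \<Longrightarrow> G w (e # ks) * g w \<approx> 0"
proof -
  assume e: "e \<in> F" and p: "path w (e # ks)"
  have e2: "sc e = w" "w \<in> V0" "e \<in> E1" "path (rg e) ks" using p by auto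
  have "G w (e # ks) * g w \<approx> (G (rg e) ks * Gg e * Vt w) * g w"
    using G_Cons_cong[OF p] e2 by (intro cong_mult_right Val_g)
  also have "\<dots> = G (rg e) ks * Gg e * (Vt w * g w)" by (simp add: mult.assoc)
  also have "\<dots> \<approx> G (rg e) ks * Gg e * g w"
    using e2 Vt_g[of w] by (intro cong_mult_left) (auto simp: Val_Gg Val_G Val_mult)
  also have "\<dots> = G (rg e) ks * (Gg e * g w)" by (simp add: mult.assoc)
  also have "\<dots> \<approx> 0"
    using e2 e cong_zero_right[OF Gg_g[of e w] Val_G[of "rg e" ks]] by auto
  finally show ?thesis .
qed

end


context lparF
begin

definition Kset :: "'v \<Rightarrow> nat \<Rightarrow> 'e list set" where
  "Kset w d = {ks. set ks \<subseteq> F \<and> path w ks \<and> length ks \<le> d}"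

lemma finite_Kset: "finite (Kset w d)"
  unfolding Kset_def
  by (rule finite_subset[OF _ finite_lists_length_le[OF finF, of d]]) auto

lemma Kset_0: "w \<in> V0 \<Longrightarrow> Kset w 0 = {[]}"
  by (auto simp: Kset_def)

lemma Kset_Suc: "w \<in> V0 \<Longrightarrow>
  Kset w (Suc d) = insert [] ((\<lambda>(e, ks). e # ks) ` (SIGMA e:{e\<in>F. sc e = w}. Kset (rg e) d))"
proof (intro equalityI subsetI)
  fix ks assume w: "w \<in> V0" and ks: "ks \<in> Kset w (Suc d)"
  show "ks \<in> insert [] ((\<lambda>(e, ks). e # ks) ` (SIGMA e:{e\<in>F. sc e = w}. Kset (rg e) d))"
  proof (cases ks)
    case Nil then show ?thesis by simp
  next
    case (Cons e ks')
    then show ?thesis using ks by (auto simp: Kset_def)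
  qed
next
  fix ks assume w: "w \<in> V0" and ks: "ks \<in> insert [] ((\<lambda>(e, ks). e # ks) ` (SIGMA e:{e\<in>F. sc e = w}. Kset (rg e) d))"
  then show "ks \<in> Kset w (Suc d)" using FE by (auto simp: Kset_def)
qed

lemma sum_Kset_Suc:
  assumes "w \<in> V0"
  shows "(\<Sum>ks\<in>Kset w (Suc d). f ks) = f [] + (\<Sum>e\<in>{e\<in>F. sc e = w}. \<Sum>ks\<in>Kset (rg e) d. f (e # ks))"
proof -
  have fin: "finite (SIGMA e:{e\<in>F. sc e = w}. Kset (rg e) d)"
    using finF finite_Kset by auto
  have inj: "inj_on (\<lambda>(e, ks). e # ks) (SIGMA e:{e\<in>F. sc e = w}. Kset (rg e) d)"
    by (auto simp: inj_on_def)
  have "(\<Sum>ks\<in>Kset w (Suc d). f ks) = f [] + (\<Sum>ks\<in>(\<lambda>(e, ks). e # ks) ` (SIGMA e:{e\<in>F. sc e = w}. Kset (rg e) d). f ks)"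
    unfolding Kset_Suc[OF assms] using fin by (subst sum.insert) auto
  also have "(\<Sum>ks\<in>(\<lambda>(e, ks). e # ks) ` (SIGMA e:{e\<in>F. sc e = w}. Kset (rg e) d). f ks)
      = (\<Sum>(e,ks)\<in>(SIGMA e:{e\<in>F. sc e = w}. Kset (rg e) d). f (e # ks))"
    using sum.reindex[OF inj, of f] by (simp add: case_prod_beta')
  also have "\<dots> = (\<Sum>e\<in>{e\<in>F. sc e = w}. \<Sum>ks\<in>Kset (rg e) d. f (e # ks))"
    using finF finite_Kset by (subst sum.Sigma) auto
  finally show ?thesis .
qed

definition trm :: "'v \<Rightarrow> 'e list \<Rightarrow> 'v \<Rightarrow> 'e list \<Rightarrow> nat \<Rightarrow> 'e list \<Rightarrow> ('v,'e,'r) L" where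
  "trm v es v' es' d ks = (if length ks < d then P v (es @ ks) * g (rend rg v (es @ ks)) * G v' (es' @ ks)
      else P v (es @ ks) * G v' (es' @ ks))"

lemma P_snoc: "P v (es @ [e]) = P v es * Ee e" by (simp add: P_def Ep_def Ee_def mult.assoc mon_mult)
lemma G_snoc: "G v (es @ [e]) = Gg e * G v es" by (simp add: G_def Gp_def Gg_def mult.assoc[symmetric] mon_mult)

lemma EXP:
  "path v es \<Longrightarrow> path v' es' \<Longrightarrow> rend rg v es = rend rg v' es' \<Longrightarrow>
   P v es * G v' es' \<approx> (\<Sum>ks\<in>Kset (rend rg v es) d. trm v es v' es' d ks)"
proof (induction d arbitrary: es es')
  case 0
  have w: "rend rg v es \<in> V0" using 0 pth_rend by metis
  show ?case using w 0 by (simp add: Kset_0 trm_def cong_refl Val_mult Val_P Val_G)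
next
  case (Suc d)
  define w where "w = rend rg v es"
  have w: "w \<in> V0" unfolding w_def using Suc.prems pth_rend by metis
  have "P v es * G v' es' \<approx> P v es * Vt w * G v' es'"
    using cong_mult_right[OF Val_G[OF Suc.prems(2)] cong_sym[OF P_Vt_end[OF Suc.prems(1)]]]
    by (simp add: w_def)
  also have "\<dots> = P v es * g w * G v' es' + (\<Sum>e\<in>{e\<in>F. sc e = w}. P v (es @ [e]) * G v' (es' @ [e]))"
    by (simp add: g_def S_def P_snoc G_snoc algebra_simps sum_distrib_left sum_distrib_right)
  also have "\<dots> \<approx> P v es * g w * G v' es' + (\<Sum>e\<in>{e\<in>F. sc e = w}. \<Sum>ks\<in>Kset (rg e) d. trm v (es @ [e]) v' (es' @ [e]) d ks)"
  proof (rule cong_add)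
    show "P v es * g w * G v' es' \<approx> P v es * g w * G v' es'"
      using Suc.prems w by (intro cong_refl Val_mult Val_P Val_G Val_g)
    show "(\<Sum>e\<in>{e\<in>F. sc e = w}. P v (es @ [e]) * G v' (es' @ [e])) \<approx>
          (\<Sum>e\<in>{e\<in>F. sc e = w}. \<Sum>ks\<in>Kset (rg e) d. trm v (es @ [e]) v' (es' @ [e]) d ks)"
    proof (rule cong_sum)
      fix e assume e: "e \<in> {e\<in>F. sc e = w}"
      have p1: "path v (es @ [e])" "path v' (es' @ [e])"
        using e Suc.prems FE w edges_ok unfolding w_def by (auto simp: pth_append)
      have "rend rg v (es @ [e]) = rg e" "rend rg v' (es' @ [e]) = rg e"
        using Suc.prems(3) by (simp_all add: rend_append w_def)
      then show "P v (es @ [e]) * G v' (es' @ [e]) \<approx> (\<Sum>ks\<in>Kset (rg e) d. trm v (es @ [e]) v' (es' @ [e]) d ks)"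
        using Suc.IH[OF p1] by simp
    qed
  qed
  also have "\<dots> = (\<Sum>ks\<in>Kset w (Suc d). trm v es v' es' (Suc d) ks)"
  proof -
    have "trm v (es @ [e]) v' (es' @ [e]) d ks = trm v es v' es' (Suc d) (e # ks)" for e ks
      by (simp add: trm_def)
    moreover have "trm v es v' es' (Suc d) [] = P v es * g w * G v' es'"
      by (simp add: trm_def w_def)
    ultimately show ?thesis unfolding sum_Kset_Suc[OF w] by simp
  qed
  finally show ?case by (simp add: w_def)
qed

end


context lparF
begin

definition Y :: "nat \<Rightarrow> 'v \<Rightarrow> 'e list \<Rightarrow> ('v,'e,'r) L" where
  "Y M v es = (if length es < M then g (rend rg v es) else 1)"
definition U :: "nat \<Rightarrow> 'v \<Rightarrow> 'e list \<Rightarrow> ('v,'e,'r) L" where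
  "U M v es = P v es * Y M v es"
definition U' :: "nat \<Rightarrow> 'v \<Rightarrow> 'e list \<Rightarrow> ('v,'e,'r) L" where
  "U' M v es = Y M v es * G v es"
definition H :: "nat \<Rightarrow> 'v \<Rightarrow> 'e list \<Rightarrow> ('v,'e,'r) L" where
  "H M v es = (if length es < M then g (rend rg v es) else Vt (rend rg v es))"

lemma Val_Y: "path v es \<Longrightarrow> Y M v es \<in> Val"
  by (simp add: Y_def Val_g Val_1 pth_rend)
lemma Cen_Y: "Cen (Y M v es)"
  by (simp add: Y_def Cen_g Cen_1)
lemma Val_U: "path v es \<Longrightarrow> U M v es \<in> Val"
  by (simp add: U_def Val_Y Val_P Val_mult)
lemma Val_U': "path v es \<Longrightarrow> U' M v es \<in> Val"
  by (simp add: U'_def Val_Y Val_G Val_mult)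
lemma Cen_U: "Cen (U M v es)"
  by (simp add: U_def Cen_Y Cen_P Cen_mult)
lemma Cen_U': "Cen (U' M v es)"
  by (simp add: U'_def Cen_Y Cen_G Cen_mult)
lemma Val_H: "path v es \<Longrightarrow> H M v es \<in> Val"
  by (simp add: H_def Val_g Val_Vt pth_rend)

lemma EXPU:
  assumes p: "path v es" "path v' es'" and r: "rend rg v es = rend rg v' es'"
    and l: "length es + d = Mr" "length es' + d = Mc"
  shows "P v es * G v' es' \<approx> (\<Sum>ks\<in>Kset (rend rg v es) d. U Mr v (es @ ks) * U' Mc v' (es' @ ks))"
proof -
  have "P v es * G v' es' \<approx> (\<Sum>ks\<in>Kset (rend rg v es) d. trm v es v' es' d ks)"
    by (rule EXP[OF p r])
  also have "\<dots> \<approx> (\<Sum>ks\<in>Kset (rend rg v es) d. U Mr v (es @ ks) * U' Mc v' (es' @ ks))"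
  proof (rule cong_sum)
    fix ks assume ks: "ks \<in> Kset (rend rg v es) d"
    have pk: "path v (es @ ks)" "path v' (es' @ ks)" using ks p r by (auto simp: Kset_def pth_append)
    have re: "rend rg v' (es' @ ks) = rend rg v (es @ ks)" using r by (simp add: rend_append)
    have w: "rend rg v (es @ ks) \<in> V0" using pk pth_rend by metis
    show "trm v es v' es' d ks \<approx> U Mr v (es @ ks) * U' Mc v' (es' @ ks)"
    proof (cases "length ks < d")
      case True
      have "U Mr v (es @ ks) * U' Mc v' (es' @ ks) =
            P v (es @ ks) * (g (rend rg v (es @ ks)) * g (rend rg v (es @ ks))) * G v' (es' @ ks)"
        using True l re by (simp add: U_def U'_def Y_def mult.assoc)
      also have "\<dots> \<approx> P v (es @ ks) * g (rend rg v (es @ ks)) * G v' (es' @ ks)"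
        using pk w by (intro cong_ctx g_idem Val_P Val_G)
      finally show ?thesis using True by (simp add: trm_def cong_sym)
    next
      case False
      then have "U Mr v (es @ ks) * U' Mc v' (es' @ ks) = trm v es v' es' d ks"
        using l by (simp add: U_def U'_def Y_def trm_def)
      moreover have "U Mr v (es @ ks) * U' Mc v' (es' @ ks) \<in> Val" using pk by (simp add: Val_mult Val_U Val_U')
      ultimately show ?thesis using cong_refl by metis
    qed
  qed
  finally show ?thesis .
qed

lemma ORTH:
  assumes p: "path v es" "path v' es'" and F1: "set es \<subseteq> F" "set es' \<subseteq> F"
    and l: "length es \<le> M" "length es' \<le> M"
  shows "U' M v es * U M v' es' \<approx> (if v = v' \<and> es = es' then H M v es else 0)"
proof -
  have eq: "U' M v es * U M v' es' = Y M v es * (G v es * P v' es') * Y M v' es'"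
    by (simp add: U_def U'_def mult.assoc)
  have vY: "Y M v es \<in> Val" "Y M v' es' \<in> Val" using p by (simp_all add: Val_Y)
  show ?thesis
  proof (cases "v = v' \<and> es = es'")
    case True
    define w where "w = rend rg v es"
    have w: "w \<in> V0" unfolding w_def using p pth_rend by metis
    have "G v es * P v' es' \<approx> Vt w"
      using GP_pre[of v es "[]"] p True by (simp add: w_def P_Nil)
    then have "U' M v es * U M v' es' \<approx> Y M v es * Vt w * Y M v' es'"
      unfolding eq using vY by (intro cong_ctx) auto
    also have "\<dots> = Y M v es * Vt w * Y M v es" using True by simp
    also have "\<dots> \<approx> H M v es"
    proof (cases "length es < M")
      case True
      have "Y M v es * Vt w * Y M v es = g w * Vt w * g w" using True by (simp add: Y_def w_def)
      also have "\<dots> \<approx> g w * g w" using w by (intro cong_mult_right g_Vt Val_g)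
      also have "\<dots> \<approx> g w" using w by (rule g_idem)
      finally show ?thesis using True by (simp add: H_def w_def)
    next
      case False
      then show ?thesis using w by (simp add: Y_def H_def w_def cong_refl Val_Vt)
    qed
    finally show ?thesis using True by simp
  next
    case False
    note nt = False
    have "U' M v es * U M v' es' \<approx> 0"
    proof (cases "v = v' \<and> ((\<exists>ks. es' = es @ ks) \<or> (\<exists>ks. es = es' @ ks))")
      case True
      then have vv: "v = v'" by simp
      show ?thesis
      proof (cases "\<exists>ks. es' = es @ ks")
        case True
        then obtain ks where ks: "es' = es @ ks" by blast
        with nt vv obtain k ks' where kk: "ks = k # ks'" by (cases ks) auto
        define w where "w = rend rg v es"
        have pw: "path w (k # ks')" using p(2) ks kk vv by (simp add: pth_append w_def)
        have kF: "k \<in> F" using F1 ks kk by auto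
        have lt: "length es < M" using l ks kk by simp
        have "G v es * P v' es' \<approx> P w (k # ks')"
          using GP_pre[of v es ks] p(2) ks kk vv by (simp add: w_def)
        then have "U' M v es * U M v' es' \<approx> Y M v es * P w (k # ks') * Y M v' es'"
          unfolding eq using vY by (intro cong_ctx) auto
        also have "\<dots> = (g w * P w (k # ks')) * Y M v' es'" using lt by (simp add: Y_def w_def)
        also have "\<dots> \<approx> 0" using cong_zero_left[OF g_P[OF kF pw] vY(2)] .
        finally show ?thesis .
      next
        case False
        with True obtain ks where ks: "es = es' @ ks" by blast
        with nt vv obtain k ks' where kk: "ks = k # ks'" by (cases ks) auto
        define w where "w = rend rg v es'"
        have pw: "path w (k # ks')" using p(1) ks kk vv by (simp add: pth_append w_def)
        have kF: "k \<in> F" using F1 ks kk by auto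
        have lt: "length es' < M" using l ks kk by simp
        have "G v es * P v' es' \<approx> G w (k # ks')"
          using GP_pre2[of v es' ks] p(1) ks kk vv by (simp add: w_def)
        then have "U' M v es * U M v' es' \<approx> Y M v es * G w (k # ks') * Y M v' es'"
          unfolding eq using vY by (intro cong_ctx) auto
        also have "\<dots> = Y M v es * (G w (k # ks') * g w)" using lt vv by (simp add: Y_def w_def mult.assoc)
        also have "\<dots> \<approx> 0" using cong_zero_right[OF G_g[OF kF pw] vY(1)] .
        finally show ?thesis .
      qed
    next
      case False
      then have "G v es * P v' es' \<approx> 0" using GP_inc p by blast
      then have "U' M v es * U M v' es' \<approx> Y M v es * 0 * Y M v' es'"
        unfolding eq using vY by (intro cong_ctx) auto
      then show ?thesis by simp
    qed
    then show ?thesis using False by (simp only: if_False)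
  qed
qed

lemma UH:
  assumes p: "path v es" "path v' es'" and r: "rend rg v es = rend rg v' es'"
    and l: "length es < Mr \<longleftrightarrow> length es' < Mc"
  shows "U Mr v es * H Mc v' es' \<approx> U Mr v es"
proof (cases "length es < Mr")
  case True
  have w: "rend rg v es \<in> V0" using p pth_rend by metis
  have "U Mr v es * H Mc v' es' = P v es * (g (rend rg v es) * g (rend rg v es)) * 1"
    using True l r by (simp add: U_def H_def Y_def mult.assoc)
  also have "\<dots> \<approx> P v es * g (rend rg v es) * 1" using p w by (intro cong_ctx g_idem Val_P Val_1)
  finally show ?thesis using True by (simp add: U_def Y_def)
next
  case False
  have "U Mr v es * H Mc v' es' = P v es * Vt (rend rg v es)"
    using False l r by (simp add: U_def H_def Y_def)
  also have "\<dots> \<approx> P v es" using P_Vt_end[OF p(1)] .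
  finally show ?thesis using False by (simp add: U_def Y_def)
qed

lemma HU:
  assumes p: "path v es" "path v' es'" and r: "rend rg v es = rend rg v' es'"
    and l: "length es < Mr \<longleftrightarrow> length es' < Mc"
  shows "H Mr v es * U' Mc v' es' \<approx> U' Mc v' es'"
proof (cases "length es < Mr")
  case True
  have w: "rend rg v' es' \<in> V0" using p pth_rend by metis
  have "H Mr v es * U' Mc v' es' = 1 * (g (rend rg v' es') * g (rend rg v' es')) * G v' es'"
    using True l r by (simp add: U'_def H_def Y_def mult.assoc)
  also have "\<dots> \<approx> 1 * g (rend rg v' es') * G v' es'" using p w by (intro cong_ctx g_idem Val_G Val_1)
  finally show ?thesis using True l by (simp add: U'_def Y_def mult.assoc)
next
  case False
  have "H Mr v es * U' Mc v' es' = Vt (rend rg v' es') * G v' es'"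
    using False l r by (simp add: U'_def H_def Y_def)
  also have "\<dots> \<approx> G v' es'" using Vt_G_end[OF p(2)] .
  finally show ?thesis using False l by (simp add: U'_def Y_def)
qed

end


definition mm :: "'k set \<Rightarrow> ('a \<Rightarrow> 'k \<Rightarrow> 'r::semiring_0) \<Rightarrow> ('k \<Rightarrow> 'b \<Rightarrow> 'r) \<Rightarrow> 'a \<Rightarrow> 'b \<Rightarrow> 'r" where
  "mm K X Y = (\<lambda>i j. \<Sum>k\<in>K. X i k * Y k j)"

lemma mm_assoc: "mm K (mm L X Y) Z = mm L X (mm K Y (Z :: _ \<Rightarrow> _ \<Rightarrow> 'r::semiring_0))"
  unfolding mm_def
  by (auto simp: fun_eq_iff sum_distrib_left sum_distrib_right mult.assoc intro: sum.swap)

lemma mm_add_right: "mm K X (Y + Z) = mm K X Y + mm K X (Z :: _ \<Rightarrow> _ \<Rightarrow> 'r::ring)"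
  unfolding mm_def by (simp add: fun_eq_iff distrib_left sum.distrib)
lemma mm_add_left: "mm K (X + Y) Z = mm K X Z + mm K Y (Z :: _ \<Rightarrow> _ \<Rightarrow> 'r::ring)"
  unfolding mm_def by (simp add: fun_eq_iff distrib_right sum.distrib)
lemma mm_diff_right: "mm K X (Y - Z) = mm K X Y - mm K X (Z :: _ \<Rightarrow> _ \<Rightarrow> 'r::ring)"
  unfolding mm_def by (simp add: fun_eq_iff right_diff_distrib sum_subtractf)
lemma mm_diff_left: "mm K (X - Y) Z = mm K X Z - mm K Y (Z :: _ \<Rightarrow> _ \<Rightarrow> 'r::ring)"
  unfolding mm_def by (simp add: fun_eq_iff left_diff_distrib sum_subtractf)

lemma lift_identity:
  fixes A :: "'a \<Rightarrow> 'c \<Rightarrow> 'r::ring" and B W :: "'c \<Rightarrow> 'a \<Rightarrow> 'r" and Rs :: "'a set" and Cs :: "'c set"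
  defines "Z \<equiv> A - mm Rs (mm Cs A B) A"
  shows "mm Rs (mm Cs A (B + W - mm Cs (mm Rs B A) W - mm Rs W (mm Cs A B)
            + mm Rs (mm Cs (mm Rs B A) W) (mm Cs A B))) A
         = mm Rs (mm Cs A B) A + mm Rs (mm Cs Z W) Z"
  unfolding Z_def
  by (simp add: mm_add_right mm_add_left mm_diff_right mm_diff_left mm_assoc algebra_simps)


definition regular_on :: "'a set \<Rightarrow> 'c set \<Rightarrow> ('a \<Rightarrow> 'c \<Rightarrow> 'r::ring) \<Rightarrow> ('c \<Rightarrow> 'a \<Rightarrow> 'r) \<Rightarrow> bool" where
  "regular_on Rs Cs A B \<longleftrightarrow> (\<forall>i\<in>Rs. \<forall>j\<in>Cs. mm Rs (mm Cs A B) A i j = A i j)"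

lemma lift_regular:
  fixes A :: "'a \<Rightarrow> 'c \<Rightarrow> 'r::ring"
  assumes "regular_on Rs Cs (A - mm Rs (mm Cs A B) A) W"
  shows "regular_on Rs Cs A (B + W - mm Cs (mm Rs B A) W - mm Rs W (mm Cs A B)
            + mm Rs (mm Cs (mm Rs B A) W) (mm Cs A B))"
  unfolding regular_on_def
proof (intro ballI)
  fix i j assume ij: "i \<in> Rs" "j \<in> Cs"
  let ?Z = "A - mm Rs (mm Cs A B) A"
  let ?F = "mm Rs (mm Cs A (B + W - mm Cs (mm Rs B A) W - mm Rs W (mm Cs A B)
            + mm Rs (mm Cs (mm Rs B A) W) (mm Cs A B))) A"
  have eq: "?F = mm Rs (mm Cs A B) A + mm Rs (mm Cs ?Z W) ?Z"
    by (rule lift_identity[where A=A and B=B and W=W and Rs=Rs and Cs=Cs])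
  have "?F i j = (mm Rs (mm Cs A B) A + mm Rs (mm Cs ?Z W) ?Z) i j" by (simp only: eq)
  also have "\<dots> = mm Rs (mm Cs A B) A i j + mm Rs (mm Cs ?Z W) ?Z i j" by simp
  also have "mm Rs (mm Cs ?Z W) ?Z i j = ?Z i j" using assms ij by (simp add: regular_on_def)
  also have "mm Rs (mm Cs A B) A i j + ?Z i j = A i j" by simp
  finally show "?F i j = A i j" .
qed

lemma lift_regular_ex:
  fixes A :: "'a \<Rightarrow> 'c \<Rightarrow> 'r::ring"
  assumes "regular_on Rs Cs (A - mm Rs (mm Cs A B) A) W"
  shows "\<exists>B'. regular_on Rs Cs A B'"
  using lift_regular[OF assms] by blast

lemma colreg:
  assumes vn: "vn_regular_ring TYPE('r::ring_1)" and fin: "finite Rs"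
  shows "\<exists>B. regular_on Rs {c} (A :: 'a \<Rightarrow> 'c \<Rightarrow> 'r) B"
  using fin
proof (induction Rs arbitrary: A rule: finite_induct)
  case empty
  then show ?case by (simp add: regular_on_def)
next
  case (insert r Rs)
  obtain B1 where B1: "regular_on Rs {c} A B1" using insert.IH by blast
  define B where "B = (\<lambda>k l. if l \<in> Rs then B1 k l else 0)"
  define Z where "Z = A - mm (insert r Rs) (mm {c} A B) A"
  have Z0: "Z i c = 0" if i: "i \<in> Rs" for i
  proof -
    have "mm (insert r Rs) (mm {c} A B) A i c = (\<Sum>l\<in>insert r Rs. A i c * B c l * A l c)"
      by (simp add: mm_def)
    also have "\<dots> = (\<Sum>l\<in>Rs. A i c * B1 c l * A l c)"
      using insert.hyps by (simp add: B_def)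
    also have "\<dots> = A i c" using B1 i by (simp add: regular_on_def mm_def)
    finally show ?thesis by (simp add: Z_def)
  qed
  obtain s where s: "Z r c * s * Z r c = Z r c" using vn unfolding vn_regular_ring_def by blast
  define W where "W = (\<lambda>(k::'c) l. if l = r then s else (0::'r))"
  have "regular_on (insert r Rs) {c} Z W"
    unfolding regular_on_def
  proof (intro ballI)
    fix i j assume i: "i \<in> insert r Rs" and j: "j \<in> {c}"
    have "mm (insert r Rs) (mm {c} Z W) Z i j = (\<Sum>l\<in>insert r Rs. Z i c * W c l * Z l c)"
      using j by (simp add: mm_def)
    also have "\<dots> = Z i c * s * Z r c"
    proof -
      have "(\<Sum>l\<in>Rs. Z i c * W c l * Z l c) = 0"
        using insert.hyps by (intro sum.neutral) (auto simp: W_def)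
      then show ?thesis using insert.hyps by (simp add: W_def)
    qed
    also have "\<dots> = Z i j" using i j s Z0 by auto
    finally show "mm (insert r Rs) (mm {c} Z W) Z i j = Z i j" .
  qed
  then show ?case using lift_regular_ex[of "insert r Rs" "{c}" A B W] by (simp add: Z_def)
qed

lemma matrix_regular:
  assumes vn: "vn_regular_ring TYPE('r::ring_1)" and finR: "finite Rs" and finC: "finite Cs"
  shows "\<exists>B. regular_on Rs Cs (A :: 'a \<Rightarrow> 'c \<Rightarrow> 'r) B"
  using finC
proof (induction Cs arbitrary: A rule: finite_induct)
  case empty
  then show ?case by (simp add: regular_on_def)
next
  case (insert c Cs)
  obtain B1 where B1: "regular_on Rs Cs A B1" using insert.IH by blast
  define B where "B = (\<lambda>k l. if k \<in> Cs then B1 k l else 0)"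
  define Z where "Z = A - mm Rs (mm (insert c Cs) A B) A"
  have AB: "mm (insert c Cs) A B = mm Cs A B1"
    using insert.hyps by (simp add: mm_def B_def fun_eq_iff)
  have Z0: "Z i j = 0" if i: "i \<in> Rs" and j: "j \<in> Cs" for i j
    using B1 i j by (simp add: Z_def AB regular_on_def)
  obtain W where W: "regular_on Rs {c} Z W" using colreg[OF vn finR, where c=c and A=Z] by blast
  have ZW: "mm (insert c Cs) Z W i l = mm {c} Z W i l" if i: "i \<in> Rs" for i l
    using insert.hyps Z0[OF i] by (simp add: mm_def)
  have "regular_on Rs (insert c Cs) Z W"
    unfolding regular_on_def
  proof (intro ballI)
    fix i j assume i: "i \<in> Rs" and j: "j \<in> insert c Cs"
    have "mm Rs (mm (insert c Cs) Z W) Z i j = mm Rs (mm {c} Z W) Z i j"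
      using ZW[OF i] by (simp add: mm_def)
    also have "\<dots> = Z i j"
    proof (cases "j = c")
      case True then show ?thesis using W i by (simp add: regular_on_def)
    next
      case False
      then have jC: "j \<in> Cs" using j by simp
      have "mm Rs (mm {c} Z W) Z i j = (\<Sum>l\<in>Rs. mm {c} Z W i l * Z l j)" by (simp add: mm_def)
      also have "\<dots> = 0" using Z0 jC by simp
      finally show ?thesis using Z0[OF i jC] by simp
    qed
    finally show "mm Rs (mm (insert c Cs) Z W) Z i j = Z i j" .
  qed
  then show ?case using lift_regular_ex[of Rs "insert c Cs" A B W] by (simp add: Z_def)
qed



lemma mon_sum: "mon (\<Sum>i\<in>I. c i) u = (\<Sum>i\<in>I. mon (c i) u)"
  by (induction I rule: infinite_finite_induct) (auto simp: mon_add)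

context lpar
begin

lemma Val_sm: "X \<in> Val \<Longrightarrow> mon c [] * X \<in> Val"
  by (intro Val_mult Val_mon) (auto simp: valid_word_def)

lemma GEN:
  fixes L :: "'a \<Rightarrow> ('v,'e,'r) L" and M N D :: "'b \<Rightarrow> ('v,'e,'r) L" and K :: "'c \<Rightarrow> ('v,'e,'r) L"
  assumes fin: "finite S1" "finite S2" "finite S3"
    and V: "\<And>a. a \<in> S1 \<Longrightarrow> L a \<in> Val"
           "\<And>b. b \<in> S2 \<Longrightarrow> M b \<in> Val" "\<And>b. b \<in> S2 \<Longrightarrow> N b \<in> Val" "\<And>b. b \<in> S2 \<Longrightarrow> D b \<in> Val"
           "\<And>c. c \<in> S3 \<Longrightarrow> K c \<in> Val"
    and CC: "\<And>a. Cen (L a)" "\<And>b. Cen (M b)"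
    and O: "\<And>b b'. b \<in> S2 \<Longrightarrow> b' \<in> S2 \<Longrightarrow> M b * N b' \<approx> (if b = b' then D b else 0)"
    and C: "\<And>a b c. a \<in> S1 \<Longrightarrow> b \<in> S2 \<Longrightarrow> c \<in> S3 \<Longrightarrow> \<alpha> a b * \<beta> b c \<noteq> 0 \<Longrightarrow>
              L a * D b * K c \<approx> L a * K c"
  shows "(\<Sum>a\<in>S1. \<Sum>b\<in>S2. mon (\<alpha> a b) [] * (L a * M b)) * (\<Sum>b'\<in>S2. \<Sum>c\<in>S3. mon (\<beta> b' c) [] * (N b' * K c))
         \<approx> (\<Sum>a\<in>S1. \<Sum>c\<in>S3. mon (\<Sum>b\<in>S2. \<alpha> a b * \<beta> b c) [] * (L a * K c))"
proof -
  have "(\<Sum>a\<in>S1. \<Sum>b\<in>S2. mon (\<alpha> a b) [] * (L a * M b)) * (\<Sum>b'\<in>S2. \<Sum>c\<in>S3. mon (\<beta> b' c) [] * (N b' * K c))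
      = (\<Sum>a\<in>S1. \<Sum>b\<in>S2. \<Sum>b'\<in>S2. \<Sum>c\<in>S3. (mon (\<alpha> a b) [] * (L a * M b)) * (mon (\<beta> b' c) [] * (N b' * K c)))"
    by (simp only: sum_distrib_right, simp only: sum_distrib_left)
  also have "\<dots> = (\<Sum>a\<in>S1. \<Sum>b\<in>S2. \<Sum>c\<in>S3. \<Sum>b'\<in>S2. (mon (\<alpha> a b) [] * (L a * M b)) * (mon (\<beta> b' c) [] * (N b' * K c)))"
    by (intro sum.cong refl sum.swap)
  also have "\<dots> = (\<Sum>a\<in>S1. \<Sum>b\<in>S2. \<Sum>c\<in>S3. \<Sum>b'\<in>S2. mon (\<alpha> a b * \<beta> b' c) [] * (L a * (M b * N b') * K c))"
    by (intro sum.cong refl) (subst smul_mult; simp add: CC Cen_mult mult.assoc)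
  also have "\<dots> \<approx> (\<Sum>a\<in>S1. \<Sum>b\<in>S2. \<Sum>c\<in>S3. \<Sum>b'\<in>S2. mon (\<alpha> a b * \<beta> b' c) [] * (L a * (if b = b' then D b else 0) * K c))"
    using V O by (intro cong_sum cong_mult_left cong_ctx) (auto simp: Val_mon valid_word_def)
  also have "\<dots> = (\<Sum>a\<in>S1. \<Sum>b\<in>S2. \<Sum>c\<in>S3. mon (\<alpha> a b * \<beta> b c) [] * (L a * D b * K c))"
  proof (intro sum.cong refl)
    fix a b c assume b: "b \<in> S2"
    have "(\<Sum>b'\<in>S2. mon (\<alpha> a b * \<beta> b' c) [] * (L a * (if b = b' then D b else 0) * K c))
        = (\<Sum>b'\<in>S2. if b = b' then mon (\<alpha> a b * \<beta> b c) [] * (L a * D b * K c) else 0)"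
      by (intro sum.cong refl) auto
    also have "\<dots> = mon (\<alpha> a b * \<beta> b c) [] * (L a * D b * K c)" using b fin by simp
    finally show "(\<Sum>b'\<in>S2. mon (\<alpha> a b * \<beta> b' c) [] * (L a * (if b = b' then D b else 0) * K c))
        = mon (\<alpha> a b * \<beta> b c) [] * (L a * D b * K c)" .
  qed
  also have "\<dots> \<approx> (\<Sum>a\<in>S1. \<Sum>b\<in>S2. \<Sum>c\<in>S3. mon (\<alpha> a b * \<beta> b c) [] * (L a * K c))"
  proof (intro cong_sum)
    fix a b c assume abc: "a \<in> S1" "b \<in> S2" "c \<in> S3"
    show "mon (\<alpha> a b * \<beta> b c) [] * (L a * D b * K c) \<approx> mon (\<alpha> a b * \<beta> b c) [] * (L a * K c)"
    proof (cases "\<alpha> a b * \<beta> b c = 0")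
      case True then show ?thesis by (simp add: cong_refl Val_0)
    next
      case False
      then show ?thesis using C[OF abc False] by (intro cong_mult_left) (auto simp: Val_mon valid_word_def)
    qed
  qed
  also have "\<dots> = (\<Sum>a\<in>S1. \<Sum>c\<in>S3. mon (\<Sum>b\<in>S2. \<alpha> a b * \<beta> b c) [] * (L a * K c))"
    by (simp add: mon_sum sum_distrib_right sum.swap[of _ S2 S3])
  finally show ?thesis .
qed


lemma REGPROD:
  fixes Ur Ur' Hr :: "'a \<Rightarrow> ('v,'e,'r) L" and Uc Uc' Hc :: "'b \<Rightarrow> ('v,'e,'r) L"
    and A :: "'a \<Rightarrow> 'b \<Rightarrow> 'r" and B :: "'b \<Rightarrow> 'a \<Rightarrow> 'r"
  assumes fin: "finite R" "finite C" and reg: "regular_on R C A B"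
    and V: "\<And>p. p \<in> R \<Longrightarrow> Ur p \<in> Val" "\<And>p. p \<in> R \<Longrightarrow> Ur' p \<in> Val" "\<And>p. p \<in> R \<Longrightarrow> Hr p \<in> Val"
           "\<And>q. q \<in> C \<Longrightarrow> Uc q \<in> Val" "\<And>q. q \<in> C \<Longrightarrow> Uc' q \<in> Val" "\<And>q. q \<in> C \<Longrightarrow> Hc q \<in> Val"
    and CC: "\<And>p. Cen (Ur p)" "\<And>p. Cen (Ur' p)" "\<And>q. Cen (Uc' q)"
    and O1: "\<And>q q'. q \<in> C \<Longrightarrow> q' \<in> C \<Longrightarrow> Uc' q * Uc q' \<approx> (if q = q' then Hc q else 0)"
    and O2: "\<And>p p'. p \<in> R \<Longrightarrow> p' \<in> R \<Longrightarrow> Ur' p * Ur p' \<approx> (if p = p' then Hr p else 0)"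
    and C1: "\<And>p q. p \<in> R \<Longrightarrow> q \<in> C \<Longrightarrow> A p q \<noteq> 0 \<Longrightarrow> Ur p * Hc q \<approx> Ur p"
    and C2: "\<And>p q. p \<in> R \<Longrightarrow> q \<in> C \<Longrightarrow> A p q \<noteq> 0 \<Longrightarrow> Hr p * Uc' q \<approx> Uc' q"
  shows "(\<Sum>p\<in>R. \<Sum>q\<in>C. mon (A p q) [] * (Ur p * Uc' q)) * (\<Sum>q\<in>C. \<Sum>p\<in>R. mon (B q p) [] * (Uc q * Ur' p))
         * (\<Sum>p\<in>R. \<Sum>q\<in>C. mon (A p q) [] * (Ur p * Uc' q))
         \<approx> (\<Sum>p\<in>R. \<Sum>q\<in>C. mon (A p q) [] * (Ur p * Uc' q))"
proof -
  let ?X = "(\<Sum>p\<in>R. \<Sum>q\<in>C. mon (A p q) [] * (Ur p * Uc' q))"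
  let ?AB = "\<lambda>p p'. \<Sum>q\<in>C. A p q * B q p'"
  have XV: "?X \<in> Val" using V by (intro Val_sum Val_sm Val_mult) auto
  have s1: "?X * (\<Sum>q\<in>C. \<Sum>p\<in>R. mon (B q p) [] * (Uc q * Ur' p))
      \<approx> (\<Sum>p\<in>R. \<Sum>p'\<in>R. mon (?AB p p') [] * (Ur p * Ur' p'))"
  proof (rule GEN[OF fin(1) fin(2) fin(1)])
    fix p q p' assume pqp: "p \<in> R" "q \<in> C" "p' \<in> R" and nz: "A p q * B q p' \<noteq> 0"
    then have "A p q \<noteq> 0" by auto
    then show "Ur p * Hc q * Ur' p' \<approx> Ur p * Ur' p'"
      using C1 pqp V by (intro cong_mult_right) auto
  qed (use V CC O1 in auto)
  have s2: "(\<Sum>p\<in>R. \<Sum>p'\<in>R. mon (?AB p p') [] * (Ur p * Ur' p')) * ?X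
      \<approx> (\<Sum>p\<in>R. \<Sum>q\<in>C. mon (\<Sum>p'\<in>R. ?AB p p' * A p' q) [] * (Ur p * Uc' q))"
  proof (rule GEN[OF fin(1) fin(1) fin(2)])
    fix p p' q assume pqp: "p \<in> R" "p' \<in> R" "q \<in> C" and nz: "?AB p p' * A p' q \<noteq> 0"
    then have "A p' q \<noteq> 0" by auto
    then have "Hr p' * Uc' q \<approx> Uc' q" using C2 pqp by auto
    then have "Ur p * (Hr p' * Uc' q) \<approx> Ur p * Uc' q" using V pqp by (intro cong_mult_left) auto
    then show "Ur p * Hr p' * Uc' q \<approx> Ur p * Uc' q" by (simp add: mult.assoc)
  qed (use V CC O2 in auto)
  have s3: "(\<Sum>p\<in>R. \<Sum>q\<in>C. mon (\<Sum>p'\<in>R. ?AB p p' * A p' q) [] * (Ur p * Uc' q)) = ?X"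
    using reg by (intro sum.cong refl) (simp add: regular_on_def mm_def)
  have "?X * (\<Sum>q\<in>C. \<Sum>p\<in>R. mon (B q p) [] * (Uc q * Ur' p)) * ?X
      \<approx> (\<Sum>p\<in>R. \<Sum>p'\<in>R. mon (?AB p p') [] * (Ur p * Ur' p')) * ?X"
    using s1 XV by (rule cong_mult_right[rotated])
  also note s2
  also note s3
  finally show ?thesis .
qed

end


lemma coeff_mult_Nil: "coeff (a * b) [] = coeff a [] * coeff b []"
  by (simp add: coeff_mult fmult_def)

context lparF
begin

lemma Z0_U: "coeff (U M v es) [] = 0"
  by (simp add: U_def P_def Vt_def coeff_mult_Nil fmono_def)

lemma main_reg:
  fixes m :: nat and c :: "nat \<Rightarrow> 'r" and v v' :: "nat \<Rightarrow> 'v" and es es' :: "nat \<Rightarrow> 'e list" and n :: int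
  assumes vn: "vn_regular_ring TYPE('r)"
    and pa: "\<And>k. k < m \<Longrightarrow> path (v k) (es k)" and pa': "\<And>k. k < m \<Longrightarrow> path (v' k) (es' k)"
    and re: "\<And>k. k < m \<Longrightarrow> rend rg (v k) (es k) = rend rg (v' k) (es' k)"
    and ln: "\<And>k. k < m \<Longrightarrow> int (length (es k)) - int (length (es' k)) = n"
    and fF: "\<And>k. k < m \<Longrightarrow> set (es k) \<subseteq> F" and fF': "\<And>k. k < m \<Longrightarrow> set (es' k) \<subseteq> F"
  shows "\<exists>y. y \<in> Val \<and> coeff y [] = 0 \<and>
     (\<Sum>k<m. mon (c k) [] * (P (v k) (es k) * G (v' k) (es' k))) * y *
     (\<Sum>k<m. mon (c k) [] * (P (v k) (es k) * G (v' k) (es' k)))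
     \<approx> (\<Sum>k<m. mon (c k) [] * (P (v k) (es k) * G (v' k) (es' k)))"
proof -
  define X where "X = (\<Sum>k<m. mon (c k) [] * (P (v k) (es k) * G (v' k) (es' k)))"
  define N where "N = (\<Sum>k<m. length (es k) + length (es' k))"
  define Mc where "Mc = N"
  define Mr where "Mr = nat (int N + n)"
  define d where "d k = Mc - length (es' k)" for k
  have lesN: "length (es' k) \<le> N" "length (es k) \<le> N" if k: "k < m" for k
  proof -
    have "length (es k) + length (es' k) \<le> N"
      unfolding N_def using k by (intro member_le_sum) auto
    then show "length (es' k) \<le> N" "length (es k) \<le> N" by auto
  qed
  have dc: "length (es' k) + d k = Mc" if k: "k < m" for k
    using lesN[OF k] by (simp add: d_def Mc_def)
  have dr: "length (es k) + d k = Mr" if k: "k < m" for k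
  proof -
    have "int (length (es k) + d k) = int N + n"
      using lesN[OF k] ln[OF k] by (simp add: d_def Mc_def of_nat_diff)
    then show ?thesis unfolding Mr_def by (metis nat_int)
  qed
  define I where "I = Sigma {..<m} (\<lambda>k. Kset (rend rg (v k) (es k)) (d k))"
  define row where "row i = (v (fst i), es (fst i) @ snd i)" for i :: "nat \<times> 'e list"
  define col where "col i = (v' (fst i), es' (fst i) @ snd i)" for i :: "nat \<times> 'e list"
  define R where "R = row ` I"
  define C where "C = col ` I"
  define A where "A p q = (\<Sum>i\<in>{i\<in>I. (row i, col i) = (p, q)}. c (fst i))" for p q
  define Ur where "Ur p = U Mr (fst p) (snd p)" for p
  define Ur' where "Ur' p = U' Mr (fst p) (snd p)" for p
  define Hr where "Hr p = H Mr (fst p) (snd p)" for p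
  define Uc where "Uc q = U Mc (fst q) (snd q)" for q
  define Uc' where "Uc' q = U' Mc (fst q) (snd q)" for q
  define Hc where "Hc q = H Mc (fst q) (snd q)" for q
  have finI: "finite I" unfolding I_def by (intro finite_SigmaI finite_Kset) auto
  have finR: "finite R" "finite C" unfolding R_def C_def using finI by auto
  have Ifacts: "path (fst (row i)) (snd (row i)) \<and> path (fst (col i)) (snd (col i))
     \<and> set (snd (row i)) \<subseteq> F \<and> set (snd (col i)) \<subseteq> F
     \<and> length (snd (row i)) \<le> Mr \<and> length (snd (col i)) \<le> Mc
     \<and> rend rg (fst (row i)) (snd (row i)) = rend rg (fst (col i)) (snd (col i))
     \<and> (length (snd (row i)) < Mr \<longleftrightarrow> length (snd (col i)) < Mc)" if i: "i \<in> I" for i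
  proof -
    obtain k ks where ik: "i = (k, ks)" by (cases i)
    have k: "k < m" and ks: "ks \<in> Kset (rend rg (v k) (es k)) (d k)" using i ik by (auto simp: I_def)
    then have ks': "set ks \<subseteq> F" "path (rend rg (v k) (es k)) ks" "length ks \<le> d k"
      by (auto simp: Kset_def)
    show ?thesis
      using ik k ks' pa[OF k] pa'[OF k] re[OF k] fF[OF k] fF'[OF k] dr[OF k] dc[OF k]
      by (auto simp: row_def col_def pth_append rend_append)
  qed
  have Rfacts: "path (fst p) (snd p) \<and> set (snd p) \<subseteq> F \<and> length (snd p) \<le> Mr" if "p \<in> R" for p
    using that Ifacts unfolding R_def by blast
  have Cfacts: "path (fst q) (snd q) \<and> set (snd q) \<subseteq> F \<and> length (snd q) \<le> Mc" if "q \<in> C" for q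
    using that Ifacts unfolding C_def by blast
  have Anz: "\<exists>i\<in>I. row i = p \<and> col i = q" if "A p q \<noteq> 0" for p q
  proof (rule ccontr)
    assume "\<not> ?thesis"
    then have e: "{i\<in>I. (row i, col i) = (p, q)} = {}" by auto
    have "A p q = 0" unfolding A_def by (subst e) simp
    then show False using that by simp
  qed
  have "X \<approx> (\<Sum>k<m. mon (c k) [] * (\<Sum>ks\<in>Kset (rend rg (v k) (es k)) (d k). Ur (row (k, ks)) * Uc' (col (k, ks))))"
    unfolding X_def
  proof (rule cong_sum)
    fix k assume "k \<in> {..<m}"
    then have k: "k < m" by simp
    have "P (v k) (es k) * G (v' k) (es' k) \<approx>
      (\<Sum>ks\<in>Kset (rend rg (v k) (es k)) (d k). U Mr (v k) (es k @ ks) * U' Mc (v' k) (es' k @ ks))"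
      by (rule EXPU[OF pa[OF k] pa'[OF k] re[OF k] dr[OF k] dc[OF k]])
    then show "mon (c k) [] * (P (v k) (es k) * G (v' k) (es' k)) \<approx>
       mon (c k) [] * (\<Sum>ks\<in>Kset (rend rg (v k) (es k)) (d k). Ur (row (k, ks)) * Uc' (col (k, ks)))"
      by (intro cong_mult_left) (auto simp: Ur_def Uc'_def row_def col_def Val_mon valid_word_def)
  qed
  also have "\<dots> = (\<Sum>i\<in>I. mon (c (fst i)) [] * (Ur (row i) * Uc' (col i)))"
    unfolding I_def by (simp add: sum_distrib_left sum.Sigma finite_Kset case_prod_beta')
  also have "\<dots> = (\<Sum>pq\<in>R \<times> C. \<Sum>i\<in>{i\<in>I. (row i, col i) = pq}. mon (c (fst i)) [] * (Ur (row i) * Uc' (col i)))"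
    by (rule sum.group[symmetric]) (use finI finR in \<open>auto simp: R_def C_def\<close>)
  also have "\<dots> = (\<Sum>pq\<in>R \<times> C. mon (A (fst pq) (snd pq)) [] * (Ur (fst pq) * Uc' (snd pq)))"
  proof (rule sum.cong[OF refl])
    fix pq assume "pq \<in> R \<times> C"
    have "(\<Sum>i\<in>{i\<in>I. (row i, col i) = pq}. mon (c (fst i)) [] * (Ur (row i) * Uc' (col i)))
        = (\<Sum>i\<in>{i\<in>I. (row i, col i) = pq}. mon (c (fst i)) [] * (Ur (fst pq) * Uc' (snd pq)))"
      by (intro sum.cong refl) auto
    also have "\<dots> = mon (A (fst pq) (snd pq)) [] * (Ur (fst pq) * Uc' (snd pq))"
      by (simp add: A_def mon_sum sum_distrib_right)
    finally show "(\<Sum>i\<in>{i\<in>I. (row i, col i) = pq}. mon (c (fst i)) [] * (Ur (row i) * Uc' (col i)))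
        = mon (A (fst pq) (snd pq)) [] * (Ur (fst pq) * Uc' (snd pq))" .
  qed
  also have "\<dots> = (\<Sum>p\<in>R. \<Sum>q\<in>C. mon (A p q) [] * (Ur p * Uc' q))"
    by (simp add: sum.cartesian_product case_prod_beta')
  finally have XX: "X \<approx> (\<Sum>p\<in>R. \<Sum>q\<in>C. mon (A p q) [] * (Ur p * Uc' q))" .
  obtain B where B: "regular_on R C A B" using matrix_regular[OF vn finR] by blast
  define y where "y = (\<Sum>q\<in>C. \<Sum>p\<in>R. mon (B q p) [] * (Uc q * Ur' p))"
  have yV: "y \<in> Val" unfolding y_def
    using Rfacts Cfacts by (intro Val_sum Val_sm Val_mult) (auto simp: Uc_def Ur'_def Val_U Val_U')
  have y0: "coeff y [] = 0" unfolding y_def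
    by (simp add: coeff_mult_Nil Uc_def Z0_U)
  have prod: "(\<Sum>p\<in>R. \<Sum>q\<in>C. mon (A p q) [] * (Ur p * Uc' q)) * y * (\<Sum>p\<in>R. \<Sum>q\<in>C. mon (A p q) [] * (Ur p * Uc' q))
      \<approx> (\<Sum>p\<in>R. \<Sum>q\<in>C. mon (A p q) [] * (Ur p * Uc' q))"
    unfolding y_def
  proof (rule REGPROD[OF finR B])
    fix p assume p: "p \<in> R"
    then show "Ur p \<in> Val" "Ur' p \<in> Val" "Hr p \<in> Val"
      using Rfacts by (auto simp: Ur_def Ur'_def Hr_def Val_U Val_U' Val_H)
  next
    fix q assume q: "q \<in> C"
    then show "Uc q \<in> Val" "Uc' q \<in> Val" "Hc q \<in> Val"
      using Cfacts by (auto simp: Uc_def Uc'_def Hc_def Val_U Val_U' Val_H)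
  next
    fix p show "Cen (Ur p)" "Cen (Ur' p)" by (simp_all add: Ur_def Ur'_def Cen_U Cen_U')
  next
    fix q show "Cen (Uc' q)" by (simp add: Uc'_def Cen_U')
  next
    fix q q' assume q: "q \<in> C" "q' \<in> C"
    have "U' Mc (fst q) (snd q) * U Mc (fst q') (snd q') \<approx>
       (if fst q = fst q' \<and> snd q = snd q' then H Mc (fst q) (snd q) else 0)"
      using Cfacts[OF q(1)] Cfacts[OF q(2)] by (intro ORTH) auto
    then show "Uc' q * Uc q' \<approx> (if q = q' then Hc q else 0)"
      by (simp only: Uc_def Uc'_def Hc_def prod_eq_iff)
  next
    fix p p' assume p: "p \<in> R" "p' \<in> R"
    have "U' Mr (fst p) (snd p) * U Mr (fst p') (snd p') \<approx>
       (if fst p = fst p' \<and> snd p = snd p' then H Mr (fst p) (snd p) else 0)"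
      using Rfacts[OF p(1)] Rfacts[OF p(2)] by (intro ORTH) auto
    then show "Ur' p * Ur p' \<approx> (if p = p' then Hr p else 0)"
      by (simp only: Ur_def Ur'_def Hr_def prod_eq_iff)
  next
    fix p q assume pq: "p \<in> R" "q \<in> C" "A p q \<noteq> 0"
    then obtain i where i: "i \<in> I" "row i = p" "col i = q" using Anz by blast
    show "Ur p * Hc q \<approx> Ur p"
      using Ifacts[OF i(1)] i by (auto simp: Ur_def Hc_def intro!: UH)
  next
    fix p q assume pq: "p \<in> R" "q \<in> C" "A p q \<noteq> 0"
    then obtain i where i: "i \<in> I" "row i = p" "col i = q" using Anz by blast
    show "Hr p * Uc' q \<approx> Uc' q"
      using Ifacts[OF i(1)] i by (auto simp: Hr_def Uc'_def intro!: HU)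
  qed
  have XV: "X \<in> Val" using XX cong_Val by blast
  have "X * y * X \<approx> (\<Sum>p\<in>R. \<Sum>q\<in>C. mon (A p q) [] * (Ur p * Uc' q)) * y * (\<Sum>p\<in>R. \<Sum>q\<in>C. mon (A p q) [] * (Ur p * Uc' q))"
    using XX yV by (intro cong_mult cong_refl)
  also note prod
  also have "(\<Sum>p\<in>R. \<Sum>q\<in>C. mon (A p q) [] * (Ur p * Uc' q)) \<approx> X" using XX by (rule cong_sym)
  finally show ?thesis using yV y0 unfolding X_def by blast
qed

end


lemma hom_decomp:
  assumes "x \<in> LPA_hom V0 E1 rg sc wv we \<sigma>"
  shows "\<exists>ts. FPS x = (\<Sum>t\<leftarrow>ts. mon (fst t) (pword (fst (snd t)) @ pghost (snd (snd t)))) \<and>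
    (\<forall>t\<in>set ts. \<sigma> \<noteq> None \<and> is_path V0 E1 rg sc (fst (snd t)) \<and> is_path V0 E1 rg sc (snd (snd t)) \<and>
       prange rg (fst (snd t)) = prange rg (snd (snd t)) \<and>
       smult (pweight wv we (fst (snd t))) (sinv (pweight wv we (snd (snd t)))) = \<sigma>)"
  using assms
proof (induction rule: LPA_hom.induct)
  case zero
  then show ?case by (intro exI[of _ "[]"]) (simp add: zero_fps_def)
next
  case (mono \<mu> \<eta> h c)
  then obtain ts where ts: "FPS h = (\<Sum>t\<leftarrow>ts. mon (fst t) (pword (fst (snd t)) @ pghost (snd (snd t))))"
    "\<forall>t\<in>set ts. \<sigma> \<noteq> None \<and> is_path V0 E1 rg sc (fst (snd t)) \<and> is_path V0 E1 rg sc (snd (snd t)) \<and>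
       prange rg (fst (snd t)) = prange rg (snd (snd t)) \<and>
       smult (pweight wv we (fst (snd t))) (sinv (pweight wv we (snd (snd t)))) = \<sigma>" by blast
  have "FPS (fadd (fmono c (pword \<mu> @ pghost \<eta>)) h) = mon c (pword \<mu> @ pghost \<eta>) + FPS h"
    by (simp add: fadd_def plus_fps_def mon_def)
  then show ?case using ts mono.hyps by (intro exI[of _ "(c, \<mu>, \<eta>) # ts"]) simp
qed

lemma is_path_pth:
  assumes E: "\<forall>e\<in>E1. sc e \<in> V0 \<and> rg e \<in> V0"
  shows "is_path V0 E1 rg sc (v, es) \<Longrightarrow> pth V0 E1 rg sc v es"
proof (induction es arbitrary: v)
  case Nil
  then show ?case by (simp add: is_path_def)
next
  case (Cons e es)
  have h: "v \<in> V0" "e \<in> E1" "set es \<subseteq> E1" "sc e = v"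
    "\<And>i. Suc i < Suc (length es) \<Longrightarrow> rg ((e # es) ! i) = sc ((e # es) ! Suc i)"
    using Cons.prems by (auto simp: is_path_def)
  have "is_path V0 E1 rg sc (rg e, es)"
    unfolding is_path_def
  proof (simp, intro conjI allI impI)
    show "rg e \<in> V0" using E h by auto
    show "set es \<subseteq> E1" using h by simp
    assume "es \<noteq> []"
    then show "sc (hd es) = rg e" using h(5)[of 0] by (cases es) auto
  next
    fix i assume "Suc i < length es"
    then show "rg (es ! i) = sc (es ! Suc i)" using h(5)[of "Suc i"] by simp
  qed
  then show ?case using Cons.IH h by simp
qed

lemma prange_rend: "prange rg (v, es) = rend rg v es"
proof (induction es arbitrary: v)
  case Nil then show ?case by (simp add: prange_def)
next
  case (Cons e es)
  then show ?case by (cases es) (auto simp: prange_def)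
qed

lemma smult_SomeD: "smult x y = Some (i, a, l) \<Longrightarrow> \<exists>a1 a2 j. x = Some (i, a1, j) \<and> y = Some (j, a2, l) \<and> a = a1 + a2"
  by (induction x y rule: smult.induct) (auto split: if_splits)

lemma sinv_SomeD: "sinv x = Some (i, a, l) \<Longrightarrow> x = Some (l, - a, i)"
  by (cases x rule: sinv.cases) auto

lemma foldr_weight:
  assumes cw: "canonical_weight V0 E1 rg sc wv we"
  shows "set es \<subseteq> E1 \<Longrightarrow> foldr (\<lambda>e acc. smult (we e) acc) es z = Some (i, a, j) \<Longrightarrow>
     \<exists>i' b j'. z = Some (i', b, j') \<and> a = b + int (length es)"
proof (induction es arbitrary: i a j)
  case Nil then show ?case by auto
next
  case (Cons e es)
  obtain a1 a2 j1 where s: "we e = Some (i, a1, j1)" "foldr (\<lambda>e acc. smult (we e) acc) es z = Some (j1, a2, j)"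
    "a = a1 + a2"
    using smult_SomeD[of "we e" "foldr (\<lambda>e acc. smult (we e) acc) es z" i a j] Cons.prems by auto
  have "a1 = 1" using cw Cons.prems s(1) unfolding canonical_weight_def by fastforce
  moreover obtain i' b j' where "z = Some (i', b, j')" "a2 = b + int (length es)"
    using Cons.IH[OF _ s(2)] Cons.prems by auto
  ultimately show ?case using s by auto
qed

lemma pweight_len:
  assumes cw: "canonical_weight V0 E1 rg sc wv we" and v: "v \<in> V0" and es: "set es \<subseteq> E1"
    and pw: "pweight wv we (v, es) = Some (i, a, j)"
  shows "a = int (length es)"
proof (cases "es = []")
  case True
  then show ?thesis using pw cw v unfolding pweight_def canonical_weight_def by fastforce
next
  case False
  then have f: "foldr (\<lambda>e acc. smult (we e) acc) (butlast es) (we (last es)) = Some (i, a, j)"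
    using pw by (simp add: pweight_def)
  have bl: "set (butlast es) \<subseteq> E1" using es by (meson in_set_butlastD subset_iff)
  obtain i' b j' where z: "we (last es) = Some (i', b, j')" "a = b + int (length (butlast es))"
    using foldr_weight[OF cw bl f] by blast
  have "last es \<in> E1" using es False by auto
  then have "b = 1" using cw z(1) unfolding canonical_weight_def by fastforce
  then show ?thesis using z False by (cases es) auto
qed

context lpar
begin

lemma pword_cong: "path v es \<Longrightarrow> mon 1 (pword (v, es)) \<approx> P v es"
proof (cases es)
  case Nil
  assume p: "path v es"
  have "mon 1 (pword (v, es)) = P v es" using Nil by (simp add: pword_def P_def Vt_def)
  then show ?thesis using Val_P[OF p] cong_refl by metis
next
  case (Cons e es')
  assume p: "path v es"
  have e: "e \<in> E1" "sc e = v" "path (rg e) es'" using p Cons by auto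
  have "mon 1 (pword (v, es)) = 1 * Ee e * Ep es'" using Cons by (simp add: pword_def Ep_def Ee_def mon_mult)
  also have "\<dots> \<approx> 1 * (Vt v * Ee e) * Ep es'"
    using e cong_sym[OF R_sE[OF e(1)]] by (intro cong_ctx) (auto simp: Val_1 Val_Ep pth_edges)
  also have "\<dots> = P v es" using Cons by (simp add: P_def Ep_Cons mult.assoc)
  finally show ?thesis .
qed

lemma pghost_cong: "path v es \<Longrightarrow> mon 1 (pghost (v, es)) \<approx> G v es"
proof (cases es)
  case Nil
  assume p: "path v es"
  have "mon 1 (pghost (v, es)) = G v es" using Nil by (simp add: pghost_def G_def Vt_def)
  then show ?thesis using Val_G[OF p] cong_refl by metis
next
  case (Cons e es')
  assume p: "path v es"
  have e: "e \<in> E1" "sc e = v" "path (rg e) es'" using p Cons by auto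
  have "mon 1 (pghost (v, es)) = Gp es' * Gg e * 1" using Cons by (simp add: pghost_def Gp_def Gg_def mon_mult)
  also have "\<dots> \<approx> Gp es' * (Gg e * Vt v) * 1"
    using e cong_sym[OF R_Gs[OF e(1)]] by (intro cong_ctx) (auto simp: Val_1 Val_Gp pth_edges)
  also have "\<dots> = G v es" using Cons by (simp add: G_def Gp_Cons mult.assoc)
  finally show ?thesis .
qed

lemma term_cong: "path v es \<Longrightarrow> path v' es' \<Longrightarrow>
   mon c (pword (v, es) @ pghost (v', es')) \<approx> mon c [] * (P v es * G v' es')"
proof -
  assume p: "path v es" "path v' es'"
  have "mon c (pword (v, es) @ pghost (v', es')) = mon c [] * (mon 1 (pword (v, es)) * mon 1 (pghost (v', es')))"
    by (simp add: mon_mult)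
  also have "\<dots> \<approx> mon c [] * (P v es * G v' es')"
    using p by (intro cong_mult_left cong_mult pword_cong pghost_cong) (auto simp: Val_mon valid_word_def)
  finally show ?thesis .
qed

end



theorem proposition5p16:
  fixes V0 :: "'v set" and E1 :: "'e set" and rg sc :: "'e \<Rightarrow> 'v"
    and wv :: "'v \<Rightarrow> 'i sg" and we :: "'e \<Rightarrow> 'i sg"
  assumes "vn_regular_ring TYPE('r::ring_1)"
    and "\<forall>e\<in>E1. sc e \<in> V0 \<and> rg e \<in> V0"
    and "canonical_weight V0 E1 rg sc wv we"
  shows "\<forall>\<sigma>. \<forall>x \<in> (LPA_hom V0 E1 rg sc wv we \<sigma> :: (('v, 'e) gen list \<Rightarrow> 'r) set).
           \<exists>y \<in> LPA_carrier V0 E1. fdiff x (fmult (fmult x y) x) \<in> LPA_ideal V0 E1 rg sc"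
proof (intro allI ballI)
  fix \<sigma> and x :: "('v, 'e) gen list \<Rightarrow> 'r"
  assume xh: "x \<in> LPA_hom V0 E1 rg sc wv we \<sigma>"
  note vn = assms(1) and E = assms(2) and cw = assms(3)
  obtain ts where ts: "FPS x = (\<Sum>t\<leftarrow>ts. mon (fst t) (pword (fst (snd t)) @ pghost (snd (snd t))))"
    "\<forall>t\<in>set ts. \<sigma> \<noteq> None \<and> is_path V0 E1 rg sc (fst (snd t)) \<and> is_path V0 E1 rg sc (snd (snd t)) \<and>
       prange rg (fst (snd t)) = prange rg (snd (snd t)) \<and>
       smult (pweight wv we (fst (snd t))) (sinv (pweight wv we (snd (snd t)))) = \<sigma>"
    using hom_decomp[OF xh] by blast
  interpret lpar V0 E1 rg sc "TYPE('r)" using E by unfold_locales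
  define m where "m = length ts"
  define c where "c k = fst (ts ! k)" for k
  define v where "v k = fst (fst (snd (ts ! k)))" for k
  define es where "es k = snd (fst (snd (ts ! k)))" for k
  define v' where "v' k = fst (snd (snd (ts ! k)))" for k
  define es' where "es' k = snd (snd (snd (ts ! k)))" for k
  define n where "n = fst (snd (the \<sigma>))"
  define F where "F = (\<Union>k<m. set (es k) \<union> set (es' k))"
  have tk: "\<sigma> \<noteq> None \<and> is_path V0 E1 rg sc (v k, es k) \<and> is_path V0 E1 rg sc (v' k, es' k) \<and>
       prange rg (v k, es k) = prange rg (v' k, es' k) \<and>
       smult (pweight wv we (v k, es k)) (sinv (pweight wv we (v' k, es' k))) = \<sigma>" if k: "k < m" for k
  proof -
    have "ts ! k \<in> set ts" using k by (simp add: m_def)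
    then show ?thesis using ts(2) by (simp add: v_def es_def v'_def es'_def)
  qed
  have pa: "pth V0 E1 rg sc (v k) (es k)" "pth V0 E1 rg sc (v' k) (es' k)" if k: "k < m" for k
    using tk[OF k] is_path_pth[OF E] by blast+
  have re: "rend rg (v k) (es k) = rend rg (v' k) (es' k)" if k: "k < m" for k
    using tk[OF k] by (simp add: prange_rend)
  have ln: "int (length (es k)) - int (length (es' k)) = n" if k: "k < m" for k
  proof -
    have s: "smult (pweight wv we (v k, es k)) (sinv (pweight wv we (v' k, es' k))) = \<sigma>" "\<sigma> \<noteq> None"
      using tk[OF k] by auto
    then obtain i0 n0 j0 where sg: "\<sigma> = Some (i0, n0, j0)" by (cases \<sigma>) auto
    obtain a1 a2 j where w: "pweight wv we (v k, es k) = Some (i0, a1, j)"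
      "sinv (pweight wv we (v' k, es' k)) = Some (j, a2, j0)" "n0 = a1 + a2"
      using smult_SomeD[of _ _ i0 n0 j0] s sg by metis
    have w2: "pweight wv we (v' k, es' k) = Some (j0, - a2, j)" using sinv_SomeD[OF w(2)] .
    have "a1 = int (length (es k))"
      using pweight_len[OF cw _ _ w(1)] pa[OF k] pth_V0 pth_edges by metis
    moreover have "- a2 = int (length (es' k))"
      using pweight_len[OF cw _ _ w2] pa[OF k] pth_V0 pth_edges by metis
    ultimately show ?thesis using sg w(3) by (simp add: n_def)
  qed
  have finF: "finite F" unfolding F_def by auto
  have FE: "F \<subseteq> E1" unfolding F_def using pa pth_edges by blast
  interpret lparF V0 E1 rg sc "TYPE('r)" F using finF FE by unfold_locales
  have fF: "set (es k) \<subseteq> F" "set (es' k) \<subseteq> F" if k: "k < m" for k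
    using k unfolding F_def by auto
  have "\<exists>y. y \<in> Val \<and> coeff y [] = 0 \<and>
    (\<Sum>k<m. mon (c k) [] * (P (v k) (es k) * G (v' k) (es' k))) * y *
     (\<Sum>k<m. mon (c k) [] * (P (v k) (es k) * G (v' k) (es' k)))
     \<approx> (\<Sum>k<m. mon (c k) [] * (P (v k) (es k) * G (v' k) (es' k)))"
  proof (rule main_reg[OF vn])
  qed (use pa re ln fF in auto)
  then obtain y where y: "y \<in> Val" "coeff y [] = 0"
    "(\<Sum>k<m. mon (c k) [] * (P (v k) (es k) * G (v' k) (es' k))) * y *
     (\<Sum>k<m. mon (c k) [] * (P (v k) (es k) * G (v' k) (es' k)))
     \<approx> (\<Sum>k<m. mon (c k) [] * (P (v k) (es k) * G (v' k) (es' k)))" by blast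
  define X where "X = (\<Sum>k<m. mon (c k) [] * (P (v k) (es k) * G (v' k) (es' k)))"
  have "FPS x = (\<Sum>k<m. mon (c k) (pword (v k, es k) @ pghost (v' k, es' k)))"
    unfolding ts(1) m_def c_def v_def es_def v'_def es'_def
    by (simp add: sum_list_sum_nth atLeast0LessThan)
  also have "\<dots> \<approx> X" unfolding X_def
    using pa by (intro cong_sum term_cong) auto
  finally have xX: "FPS x \<approx> X" .
  have "FPS x * y * FPS x \<approx> X * y * X" using xX y(1) by (intro cong_mult cong_refl)
  also have "\<dots> \<approx> X" using y(3) by (simp add: X_def)
  also have "X \<approx> FPS x" using xX by (rule cong_sym)
  finally have "FPS x \<approx> FPS x * y * FPS x" by (rule cong_sym)
  then have "FPS x - FPS x * y * FPS x \<in> J" by (simp add: cong_def)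
  moreover have "coeff (FPS x - FPS x * y * FPS x) = fdiff x (fmult (fmult x (coeff y)) x)"
    by (simp add: fdiff_def minus_fps_def coeff_mult)
  ultimately have "fdiff x (fmult (fmult x (coeff y)) x) \<in> LPA_ideal V0 E1 rg sc"
    by (simp add: J_def)
  moreover have "coeff y \<in> LPA_carrier V0 E1"
    using y(1,2) unfolding LPA_carrier_def Val_def valid_word_def by auto
  ultimately show "\<exists>y\<in>LPA_carrier V0 E1. fdiff x (fmult (fmult x y) x) \<in> LPA_ideal V0 E1 rg sc" by blast
qed


end
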